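(* Let $A,B>0$, $x\ge1$, let $\lambda$ be a nonnegative multiplicative function in $\mathcal M(x;A,B)$, and let $\vartheta$ be a complex-valued additive function. Put $$\Theta(x):=\sum_{p^\nu\le x}\frac{\lambda(p^\nu)\vartheta(p^\nu)}{p^\nu},\qquad\mathfrak S(x):=\sum_{p^\nu\le x}\frac{\lambda(p^\nu)|\vartheta(p^\nu)|^2}{p^\nu},$$ the sums running over prime powers $p^\nu$ with $\nu\ge1$. Then $$\sum_{n\le x}\frac{\lambda(n)}{n}|\vartheta(n)-\Theta(x)|^2\ll\mathfrak S(x)\sum_{n\le x}\frac{\lambda(n)}{n},$$ with implied constant depending only on $A,B$.
   Context: For $x\ge1$, $A,B>0$, $\mathcal M(x;A,B)$ is the class of complex multiplicative $f$ with $\max_{p\le x}|f(p)|\le A$ and $\sum_{p^\nu\le x,\ \nu\ge2}|f(p^\nu)|\log(p^\nu)/p^\nu\le B$ ($p$ prime). *)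

theory Defs
  imports "HOL-Analysis.Analysis" "HOL-Number_Theory.Number_Theory"
begin

definition multiplicative :: "(nat \<Rightarrow> 'a::comm_semiring_1) \<Rightarrow> bool" where
  "multiplicative f \<longleftrightarrow> f 1 = 1 \<and> (\<forall>m n. coprime m n \<longrightarrow> f (m * n) = f m * f n)"

definition additive :: "(nat \<Rightarrow> 'a::comm_monoid_add) \<Rightarrow> bool" where
  "additive f \<longleftrightarrow> (\<forall>m n. coprime m n \<longrightarrow> f (m * n) = f m + f n)"

definition classM :: "real \<Rightarrow> real \<Rightarrow> real \<Rightarrow> (nat \<Rightarrow> complex) \<Rightarrow> bool" where
  "classM x A B f \<longleftrightarrow> multiplicative f
     \<and> (\<forall>p. prime p \<and> real p \<le> x \<longrightarrow> cmod (f p) \<le> A)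
     \<and> (\<Sum>(p,\<nu>)\<in>{(p,\<nu>). prime p \<and> 2 \<le> \<nu> \<and> real (p ^ \<nu>) \<le> x}.
          cmod (f (p ^ \<nu>)) * ln (real (p ^ \<nu>)) / real (p ^ \<nu>)) \<le> B"

end

theory Submission
  imports Defs
begin


definition NT :: "real \<Rightarrow> nat set \<Rightarrow> nat set" where
  "NT x T = {n. n > 0 \<and> (\<forall>p. prime p \<longrightarrow> p dvd n \<longrightarrow> p \<in> T \<and> real (p ^ multiplicity p n) \<le> x)}"

definition VV :: "real \<Rightarrow> nat \<Rightarrow> nat set" where
  "VV x p = {\<nu>. real (p ^ \<nu>) \<le> x}"

lemma NT_empty: "NT x {} = {1}"
proof -
  have "n = 1" if "n > 0" "\<forall>p. prime p \<longrightarrow> \<not> p dvd n" for n :: nat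
    using that prime_factor_nat by blast
  thus ?thesis unfolding NT_def by auto
qed

lemma mult_other:
  fixes p q m :: nat
  assumes "prime p" "prime q" "q \<noteq> p" "m > 0"
  shows "multiplicity q (p ^ k * m) = multiplicity q m"
proof -
  have "multiplicity q (p ^ k * m) = multiplicity q (p ^ k) + multiplicity q m"
    using assms by (intro prime_elem_multiplicity_mult_distrib) (auto simp: prime_gt_0_nat)
  also have "multiplicity q (p ^ k) = k * multiplicity q p"
    using assms by (intro prime_elem_multiplicity_power_distrib) (auto simp: prime_gt_0_nat)
  also have "multiplicity q p = 0" using assms prime_multiplicity_other by metis
  finally show ?thesis by simp
qed

lemma mult_same:
  fixes p m :: nat
  assumes "prime p" "\<not> p dvd m"
  shows "multiplicity p (p ^ k * m) = k"
  using assms by (intro multiplicity_decomposeI) auto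

lemma NT_insert:
  assumes p: "prime p" and pT: "p \<notin> T" and x: "x \<ge> 1"
  shows "bij_betw (\<lambda>(\<nu>,m). p ^ \<nu> * m) (VV x p \<times> NT x T) (NT x (insert p T))"
proof (rule bij_betwI[where g = "\<lambda>n. (multiplicity p n, n div p ^ multiplicity p n)"])
  have ndvd: "\<not> p dvd m" if "m \<in> NT x T" for m
    using that pT p unfolding NT_def by auto
  show "(\<lambda>(\<nu>, m). p ^ \<nu> * m) \<in> VV x p \<times> NT x T \<rightarrow> NT x (insert p T)"
  proof safe
    fix \<nu> m assume nu: "\<nu> \<in> VV x p" and m: "m \<in> NT x T"
    have m0: "m > 0" using m unfolding NT_def by auto
    have pm: "\<not> p dvd m" using ndvd m .
    show "p ^ \<nu> * m \<in> NT x (insert p T)"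
      unfolding NT_def
    proof (safe)
      show "0 < p ^ \<nu> * m" using m0 p by (simp add: prime_gt_0_nat)
    next
      fix q assume q: "prime q" "q dvd p ^ \<nu> * m" "q \<notin> T"
      hence "q dvd p ^ \<nu> \<or> q dvd m" using prime_dvd_mult_iff by blast
      moreover have "\<not> q dvd m" using q m unfolding NT_def by auto
      ultimately have "q dvd p ^ \<nu>" by blast
      hence "q dvd p" using q(1) prime_dvd_power by blast
      thus "q = p" using q(1) p primes_dvd_imp_eq by blast
    next
      fix q assume q: "prime q" "q dvd p ^ \<nu> * m"
      show "real (q ^ multiplicity q (p ^ \<nu> * m)) \<le> x"
      proof (cases "q = p")
        case True
        thus ?thesis using mult_same[OF p pm] nu unfolding VV_def by simp
      next
        case False
        have "\<not> q dvd p ^ \<nu>" using False q(1) p prime_dvd_power primes_dvd_imp_eq by blast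
        hence "q dvd m" using q prime_dvd_mult_iff by blast
        thus ?thesis using mult_other[OF p q(1) False m0] m q unfolding NT_def by auto
      qed
    qed
  qed
  show "(\<lambda>n. (multiplicity p n, n div p ^ multiplicity p n)) \<in> NT x (insert p T) \<rightarrow> VV x p \<times> NT x T"
  proof safe
    fix n assume n: "n \<in> NT x (insert p T)"
    have n0: "n > 0" using n unfolding NT_def by auto
    define k where "k = multiplicity p n"
    define m where "m = n div p ^ k"
    have nm: "n = p ^ k * m" unfolding m_def k_def using multiplicity_dvd[of p n] by simp
    have pm: "\<not> p dvd m" unfolding m_def k_def using n0 p by (intro multiplicity_decompose) auto
    have m0: "m > 0" using n0 nm by (cases "m = 0") auto
    show "multiplicity p n \<in> VV x p"
    proof (cases "k = 0")
      case True thus ?thesis using x unfolding VV_def k_def by simp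
    next
      case False
      hence "p dvd n" using nm by (simp add: dvd_def) (metis dvd_def dvd_mult2 dvd_power gr0I)
      thus ?thesis using n p unfolding NT_def VV_def by auto
    qed
    show "n div p ^ multiplicity p n \<in> NT x T"
      unfolding k_def[symmetric] m_def[symmetric] NT_def
    proof safe
      show "0 < m" by fact
    next
      fix q assume q: "prime q" "q dvd m"
      have qn: "q dvd n" using q nm by simp
      have "q \<noteq> p" using q pm by auto
      thus "q \<in> T" using qn q n unfolding NT_def by auto
    next
      fix q assume q: "prime q" "q dvd m"
      have qn: "q dvd n" using q nm by simp
      have qp: "q \<noteq> p" using q pm by auto
      have "multiplicity q n = multiplicity q m" using nm mult_other[OF p q(1) qp m0] by simp
      thus "real (q ^ multiplicity q m) \<le> x" using qn q n unfolding NT_def by auto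
    qed
  qed
  fix a assume "a \<in> VV x p \<times> NT x T"
  then obtain \<nu> m where a: "a = (\<nu>, m)" "m \<in> NT x T" by auto
  have pm: "\<not> p dvd m" using ndvd a by auto
  have m0: "m > 0" using a unfolding NT_def by auto
  show "(\<lambda>n. (multiplicity p n, n div p ^ multiplicity p n)) ((\<lambda>(\<nu>, m). p ^ \<nu> * m) a) = a"
    using a mult_same[OF p pm, of \<nu>] p by (simp add: prime_gt_0_nat)
next
  fix n assume n: "n \<in> NT x (insert p T)"
  show "(case (multiplicity p n, n div p ^ multiplicity p n) of (\<nu>, m) \<Rightarrow> p ^ \<nu> * m) = n"
    using multiplicity_dvd[of p n] by simp
qed



lemma finite_VV: assumes "prime p" shows "finite (VV x p)"
proof -
  have "VV x p \<subseteq> {..nat \<lfloor>x\<rfloor>}"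
  proof
    fix \<nu> assume "\<nu> \<in> VV x p"
    hence h: "real (p ^ \<nu>) \<le> x" unfolding VV_def by auto
    have "\<nu> < 2 ^ \<nu>" by (rule less_exp)
    also have "(2::nat) ^ \<nu> \<le> p ^ \<nu>" using assms prime_ge_2_nat power_mono by blast
    finally have "real \<nu> \<le> x" using h by linarith
    thus "\<nu> \<in> {..nat \<lfloor>x\<rfloor>}" by (simp add: le_nat_floor)
  qed
  thus ?thesis using finite_subset by blast
qed

lemma zero_VV: "x \<ge> 1 \<Longrightarrow> 0 \<in> VV x p" unfolding VV_def by simp

lemma sum_NT_insert:
  assumes "prime p" "p \<notin> U" "x \<ge> 1"
  shows "(\<Sum>n\<in>NT x (insert p U). g n) = (\<Sum>\<nu>\<in>VV x p. \<Sum>m\<in>NT x U. g (p ^ \<nu> * m))"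
proof -
  have "(\<Sum>(\<nu>,m)\<in>VV x p \<times> NT x U. g (p ^ \<nu> * m)) = sum g (NT x (insert p U))"
    using sum.reindex_bij_betw[OF NT_insert[OF assms], of g] by (simp add: case_prod_unfold)
  thus ?thesis by (simp add: sum.cartesian_product)
qed

lemma finite_NT:
  assumes "finite U" "\<forall>p\<in>U. prime p" "x \<ge> 1"
  shows "finite (NT x U)"
  using assms
proof (induction U rule: finite_induct)
  case empty thus ?case by (simp add: NT_empty)
next
  case (insert p U)
  have "NT x (insert p U) = (\<lambda>(\<nu>,m). p ^ \<nu> * m) ` (VV x p \<times> NT x U)"
    using NT_insert[of p U x] insert by (simp add: bij_betw_def)
  thus ?case using insert finite_VV by auto
qed

lemma NT_mono: "U \<subseteq> U' \<Longrightarrow> NT x U \<subseteq> NT x U'"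
  unfolding NT_def by blast

lemma NT_ndvd: "prime p \<Longrightarrow> p \<notin> U \<Longrightarrow> m \<in> NT x U \<Longrightarrow> \<not> p dvd m"
  unfolding NT_def by auto

lemma NT_pos: "m \<in> NT x U \<Longrightarrow> m > 0"
  unfolding NT_def by auto

locale tk =
  fixes x A B :: real and lam :: "nat \<Rightarrow> real"
  assumes x1: "x \<ge> 1" and Apos: "A > 0" and Bpos: "B > 0"
    and lam_nn: "\<And>n. lam n \<ge> 0" and lam_mult: "multiplicative lam"
    and lamA: "\<And>p. prime p \<Longrightarrow> real p \<le> x \<Longrightarrow> lam p \<le> A"
    and lamB: "(\<Sum>(p,\<nu>)\<in>{(p,\<nu>). prime p \<and> 2 \<le> \<nu> \<and> real (p ^ \<nu>) \<le> x}.
          lam (p ^ \<nu>) * ln (real (p ^ \<nu>)) / real (p ^ \<nu>)) \<le> B"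
begin

definition w :: "nat \<Rightarrow> real" where "w n = lam n / real n"
definition T :: "nat set" where "T = {p. prime p \<and> real p \<le> x}"
definition Z :: "nat \<Rightarrow> real" where "Z p = (\<Sum>\<nu>\<in>VV x p. w (p ^ \<nu>))"

lemma w_nn: "w n \<ge> 0" unfolding w_def using lam_nn by simp

lemma w1: "w 1 = 1" using lam_mult unfolding w_def multiplicative_def by simp

lemma finite_T: "finite T"
proof -
  have "T \<subseteq> {..nat \<lfloor>x\<rfloor>}" unfolding T_def by (auto simp: le_nat_floor)
  thus ?thesis using finite_subset by blast
qed

lemma T_prime: "\<forall>p\<in>T. prime p" unfolding T_def by auto

lemma w_mult: assumes "prime p" "\<not> p dvd m"
  shows "w (p ^ \<nu> * m) = w (p ^ \<nu>) * w m"
proof -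
  have "coprime (p ^ \<nu>) m" using prime_imp_coprime[OF assms] by simp
  hence "lam (p ^ \<nu> * m) = lam (p ^ \<nu>) * lam m" using lam_mult unfolding multiplicative_def by blast
  thus ?thesis unfolding w_def by simp
qed

lemma Z_ge1: assumes "prime p" shows "Z p \<ge> 1"
proof -
  have "Z p = w (p ^ 0) + (\<Sum>\<nu>\<in>VV x p - {0}. w (p ^ \<nu>))"
    unfolding Z_def using sum.remove[OF finite_VV[OF assms] zero_VV[OF x1], of "\<lambda>\<nu>. w (p ^ \<nu>)"] by simp
  moreover have "(\<Sum>\<nu>\<in>VV x p - {0}. w (p ^ \<nu>)) \<ge> 0" by (rule sum_nonneg) (rule w_nn)
  ultimately show ?thesis using w1 by simp
qed

end


lemma prod_sums2:
  fixes a b u v :: "'a \<Rightarrow> real"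
  shows "(\<Sum>i\<in>I. \<Sum>j\<in>J. a i * b j * (u i + v j)\<^sup>2) =
    (\<Sum>i\<in>I. a i * (u i)\<^sup>2) * (\<Sum>j\<in>J. b j) + 2 * (\<Sum>i\<in>I. a i * u i) * (\<Sum>j\<in>J. b j * v j)
    + (\<Sum>i\<in>I. a i) * (\<Sum>j\<in>J. b j * (v j)\<^sup>2)"
proof -
  have "(\<Sum>i\<in>I. \<Sum>j\<in>J. a i * b j * (u i + v j)\<^sup>2) =
     (\<Sum>i\<in>I. \<Sum>j\<in>J. (a i * (u i)\<^sup>2) * b j + 2 * (a i * u i) * (b j * v j) + a i * (b j * (v j)\<^sup>2))"
    by (intro sum.cong refl) (simp add: power2_eq_square algebra_simps)
  also have "\<dots> = (\<Sum>i\<in>I. a i * (u i)\<^sup>2) * (\<Sum>j\<in>J. b j) + (\<Sum>i\<in>I. 2 * (a i * u i)) * (\<Sum>j\<in>J. b j * v j)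
    + (\<Sum>i\<in>I. a i) * (\<Sum>j\<in>J. b j * (v j)\<^sup>2)"
    unfolding sum_product by (simp only: sum.distrib)
  also have "(\<Sum>i\<in>I. 2 * (a i * u i)) = 2 * (\<Sum>i\<in>I. a i * u i)" by (simp add: sum_distrib_left)
  finally show ?thesis .
qed

lemma prod_sums1:
  fixes a b u v :: "'a \<Rightarrow> real"
  shows "(\<Sum>i\<in>I. \<Sum>j\<in>J. a i * b j * (u i + v j)) =
    (\<Sum>i\<in>I. a i * u i) * (\<Sum>j\<in>J. b j) + (\<Sum>i\<in>I. a i) * (\<Sum>j\<in>J. b j * v j)"
proof -
  have "(\<Sum>i\<in>I. \<Sum>j\<in>J. a i * b j * (u i + v j)) =
     (\<Sum>i\<in>I. \<Sum>j\<in>J. (a i * u i) * b j + a i * (b j * v j))"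
    by (intro sum.cong refl) (simp add: algebra_simps)
  also have "\<dots> = (\<Sum>i\<in>I. a i * u i) * (\<Sum>j\<in>J. b j) + (\<Sum>i\<in>I. a i) * (\<Sum>j\<in>J. b j * v j)"
    unfolding sum_product by (simp only: sum.distrib)
  finally show ?thesis .
qed

locale tkt = tk +
  fixes t :: "nat \<Rightarrow> real"
  assumes t_add: "additive t"
begin

definition cp :: "nat \<Rightarrow> real" where
  "cp p = (\<Sum>\<nu>\<in>VV x p. w (p ^ \<nu>) * t (p ^ \<nu>)) / Z p"
definition D :: "nat \<Rightarrow> real" where
  "D p = (\<Sum>\<nu>\<in>VV x p. w (p ^ \<nu>) * (t (p ^ \<nu>) - cp p)\<^sup>2) / Z p"

lemma t1: "t 1 = 0"
  using t_add unfolding additive_def by (metis add_cancel_left_left coprime_1_left mult_1)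

lemma t_mult: assumes "prime p" "\<not> p dvd m"
  shows "t (p ^ \<nu> * m) = t (p ^ \<nu>) + t m"
proof -
  have "coprime (p ^ \<nu>) m" using prime_imp_coprime[OF assms] by simp
  thus ?thesis using t_add unfolding additive_def by blast
qed

lemma mean_p: assumes "prime p"
  shows "(\<Sum>\<nu>\<in>VV x p. w (p ^ \<nu>) * (t (p ^ \<nu>) - cp p)) = 0"
proof -
  have Z: "Z p > 0" using Z_ge1[OF assms] by simp
  have "(\<Sum>\<nu>\<in>VV x p. w (p ^ \<nu>) * (t (p ^ \<nu>) - cp p))
     = (\<Sum>\<nu>\<in>VV x p. w (p ^ \<nu>) * t (p ^ \<nu>)) - cp p * Z p"
    unfolding Z_def by (simp add: algebra_simps sum_subtractf sum_distrib_left)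
  thus ?thesis unfolding cp_def using Z by simp
qed

lemma var_p: assumes "prime p"
  shows "(\<Sum>\<nu>\<in>VV x p. w (p ^ \<nu>) * (t (p ^ \<nu>) - cp p)\<^sup>2) = Z p * D p"
  using Z_ge1[OF assms] unfolding D_def by simp

lemma indC:
  assumes "finite U" "\<forall>p\<in>U. prime p"
  shows "(\<Sum>n\<in>NT x U. w n) = (\<Prod>p\<in>U. Z p) \<and>
         (\<Sum>n\<in>NT x U. w n * (t n - (\<Sum>p\<in>U. cp p))) = 0 \<and>
         (\<Sum>n\<in>NT x U. w n * (t n - (\<Sum>p\<in>U. cp p))\<^sup>2) = (\<Prod>p\<in>U. Z p) * (\<Sum>p\<in>U. D p)"
  using assms
proof (induction U rule: finite_induct)
  case empty
  show ?case using w1 t1 by (simp add: NT_empty)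
next
  case (insert p U)
  have p: "prime p" using insert by auto
  have IH: "(\<Sum>n\<in>NT x U. w n) = (\<Prod>p\<in>U. Z p)"
    "(\<Sum>n\<in>NT x U. w n * (t n - (\<Sum>p\<in>U. cp p))) = 0"
    "(\<Sum>n\<in>NT x U. w n * (t n - (\<Sum>p\<in>U. cp p))\<^sup>2) = (\<Prod>p\<in>U. Z p) * (\<Sum>p\<in>U. D p)"
    using insert by auto
  define c where "c = (\<Sum>p\<in>U. cp p)"
  have cins: "(\<Sum>p\<in>insert p U. cp p) = cp p + c" unfolding c_def using insert by simp
  have key: "w (p ^ \<nu> * m) = w (p ^ \<nu>) * w m \<and>
      t (p ^ \<nu> * m) - (cp p + c) = (t (p ^ \<nu>) - cp p) + (t m - c)"
    if "m \<in> NT x U" for \<nu> m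
  proof -
    have "\<not> p dvd m" using NT_ndvd[OF p insert(2) that] .
    thus ?thesis using w_mult[OF p] t_mult[OF p] by simp
  qed
  have key1: "w (p ^ \<nu> * m) * (t (p ^ \<nu> * m) - (cp p + c)) = w (p ^ \<nu>) * w m * ((t (p ^ \<nu>) - cp p) + (t m - c))"
    and key2: "w (p ^ \<nu> * m) * (t (p ^ \<nu> * m) - (cp p + c))\<^sup>2 = w (p ^ \<nu>) * w m * ((t (p ^ \<nu>) - cp p) + (t m - c))\<^sup>2"
    if "m \<in> NT x U" for \<nu> m using key[OF that, of \<nu>] by (simp_all add: algebra_simps)
  have A: "(\<Sum>n\<in>NT x (insert p U). w n) = (\<Sum>\<nu>\<in>VV x p. \<Sum>m\<in>NT x U. w (p ^ \<nu>) * w m)"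
    unfolding sum_NT_insert[OF p insert(2) x1] by (intro sum.cong refl) (use key in blast)
  also have "\<dots> = Z p * (\<Sum>m\<in>NT x U. w m)" unfolding Z_def by (simp add: sum_product)
  finally have A': "(\<Sum>n\<in>NT x (insert p U). w n) = (\<Prod>p\<in>insert p U. Z p)"
    using IH(1) insert by simp
  have B: "(\<Sum>n\<in>NT x (insert p U). w n * (t n - (\<Sum>p\<in>insert p U. cp p)))
    = (\<Sum>\<nu>\<in>VV x p. \<Sum>m\<in>NT x U. w (p ^ \<nu>) * w m * ((t (p ^ \<nu>) - cp p) + (t m - c)))"
    unfolding cins sum_NT_insert[OF p insert(2) x1] by (intro sum.cong refl) (rule key1)
  also have "\<dots> = 0" unfolding prod_sums1 using mean_p[OF p] IH(2) unfolding c_def by simp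
  finally have B': "(\<Sum>n\<in>NT x (insert p U). w n * (t n - (\<Sum>p\<in>insert p U. cp p))) = 0" .
  have C: "(\<Sum>n\<in>NT x (insert p U). w n * (t n - (\<Sum>p\<in>insert p U. cp p))\<^sup>2)
    = (\<Sum>\<nu>\<in>VV x p. \<Sum>m\<in>NT x U. w (p ^ \<nu>) * w m * ((t (p ^ \<nu>) - cp p) + (t m - c))\<^sup>2)"
    unfolding cins sum_NT_insert[OF p insert(2) x1] by (intro sum.cong refl) (rule key2)
  also have "\<dots> = Z p * D p * (\<Prod>p\<in>U. Z p) + Z p * ((\<Prod>p\<in>U. Z p) * (\<Sum>p\<in>U. D p))"
    unfolding prod_sums2 using mean_p[OF p] IH var_p[OF p] unfolding c_def Z_def by simp
  also have "\<dots> = (\<Prod>p\<in>insert p U. Z p) * (\<Sum>p\<in>insert p U. D p)"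
    using insert by (simp add: algebra_simps)
  finally show ?case using A' B' by blast
qed

end


lemma CS_weighted:
  fixes a f g :: "'a \<Rightarrow> real"
  assumes "\<And>i. i \<in> I \<Longrightarrow> a i \<ge> 0"
  shows "(\<Sum>i\<in>I. a i * f i * g i)\<^sup>2 \<le> (\<Sum>i\<in>I. a i * (f i)\<^sup>2) * (\<Sum>i\<in>I. a i * (g i)\<^sup>2)"
proof -
  have "(\<Sum>i\<in>I. (sqrt (a i) * f i) * (sqrt (a i) * g i))\<^sup>2 \<le>
      (\<Sum>i\<in>I. (sqrt (a i) * f i)\<^sup>2) * (\<Sum>i\<in>I. (sqrt (a i) * g i)\<^sup>2)"
    by (rule Cauchy_Schwarz_ineq_sum)
  moreover have "(\<Sum>i\<in>I. (sqrt (a i) * f i) * (sqrt (a i) * g i)) = (\<Sum>i\<in>I. a i * f i * g i)"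
    using assms by (intro sum.cong refl) (simp add: algebra_simps)
  moreover have "(\<Sum>i\<in>I. (sqrt (a i) * f i)\<^sup>2) = (\<Sum>i\<in>I. a i * (f i)\<^sup>2)"
    using assms by (intro sum.cong refl) (simp add: power_mult_distrib)
  moreover have "(\<Sum>i\<in>I. (sqrt (a i) * g i)\<^sup>2) = (\<Sum>i\<in>I. a i * (g i)\<^sup>2)"
    using assms by (intro sum.cong refl) (simp add: power_mult_distrib)
  ultimately show ?thesis by simp
qed

context tk
begin

lemma sum_VV_minus0:
  assumes "prime p" "f 1 = 0"
  shows "(\<Sum>\<nu>\<in>VV x p - {0}. f (p ^ \<nu>)) = (\<Sum>\<nu>\<in>VV x p. f (p ^ \<nu>))"
  using sum.remove[OF finite_VV[OF assms(1)] zero_VV[OF x1], of "\<lambda>\<nu>. f (p ^ \<nu>)"] assms by simp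

lemma Z_minus1: assumes "prime p" shows "Z p - 1 = (\<Sum>\<nu>\<in>VV x p - {0}. w (p ^ \<nu>))"
  using sum.remove[OF finite_VV[OF assms(1)] zero_VV[OF x1], of "\<lambda>\<nu>. w (p ^ \<nu>)"] w1
  unfolding Z_def by simp

end

context tkt
begin

definition SS :: real where "SS = (\<Sum>p\<in>T. \<Sum>\<nu>\<in>VV x p. w (p ^ \<nu>) * (t (p ^ \<nu>))\<^sup>2)"
definition Th :: real where "Th = (\<Sum>p\<in>T. \<Sum>\<nu>\<in>VV x p. w (p ^ \<nu>) * t (p ^ \<nu>))"
definition EE :: real where "EE = (\<Sum>p\<in>T. (Z p - 1)\<^sup>2)"

lemma D_le: assumes "prime p" shows "D p \<le> (\<Sum>\<nu>\<in>VV x p. w (p ^ \<nu>) * (t (p ^ \<nu>))\<^sup>2)"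
proof -
  have Z: "Z p \<ge> 1" using Z_ge1[OF assms] .
  define m where "m = (\<Sum>\<nu>\<in>VV x p. w (p ^ \<nu>) * t (p ^ \<nu>))"
  define s where "s = (\<Sum>\<nu>\<in>VV x p. w (p ^ \<nu>) * (t (p ^ \<nu>))\<^sup>2)"
  have s0: "s \<ge> 0" unfolding s_def by (intro sum_nonneg mult_nonneg_nonneg w_nn) simp
  have "(\<Sum>\<nu>\<in>VV x p. w (p ^ \<nu>) * (t (p ^ \<nu>) - cp p)\<^sup>2)
      = (\<Sum>\<nu>\<in>VV x p. w (p ^ \<nu>) * (t (p ^ \<nu>))\<^sup>2 - 2 * cp p * (w (p ^ \<nu>) * t (p ^ \<nu>)) + (cp p)\<^sup>2 * w (p ^ \<nu>))"
    by (intro sum.cong refl) (simp add: power2_eq_square algebra_simps)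
  also have "\<dots> = s - 2 * cp p * m + (cp p)\<^sup>2 * Z p"
    unfolding s_def m_def Z_def by (simp add: sum.distrib sum_subtractf sum_distrib_left)
  also have "m = cp p * Z p" unfolding cp_def m_def using Z by simp
  finally have "Z p * D p = s - (cp p)\<^sup>2 * Z p" using var_p[OF assms] by (simp add: power2_eq_square algebra_simps)
  hence "Z p * D p \<le> s" using Z by (simp add: mult_nonneg_nonneg)
  hence "D p \<le> s / Z p" using Z by (simp add: field_simps)
  also have "s / Z p \<le> s"
  proof -
    have "s * 1 \<le> s * Z p" using mult_left_mono[OF Z s0] .
    thus ?thesis using Z by (simp add: divide_le_eq)
  qed
  finally show ?thesis unfolding s_def .
qed

lemma center_bound: "((\<Sum>p\<in>T. cp p) - Th)\<^sup>2 \<le> EE * SS"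
proof -
  define r where "r p = 1 - 1 / Z p" for p
  define Sg where "Sg = Sigma T (\<lambda>p. VV x p - {0})"
  have finS: "\<forall>p\<in>T. finite (VV x p - {0})" using finite_VV T_prime by blast
  have r01: "0 \<le> r p \<and> r p \<le> 1 \<and> r p \<le> Z p - 1" if "p \<in> T" for p
  proof -
    have Z: "Z p \<ge> 1" using Z_ge1 T_prime that by blast
    have "1 - 1 / Z p \<le> Z p - 1"
    proof -
      have "(Z p - 1) * 1 \<le> (Z p - 1) * Z p" using Z by (intro mult_left_mono) auto
      hence "Z p - 1 \<le> (Z p - 1) * Z p" by simp
      thus ?thesis using Z by (simp add: field_simps)
    qed
    thus ?thesis unfolding r_def using Z by (simp add: field_simps)
  qed
  have "(\<Sum>p\<in>T. cp p) - Th = - (\<Sum>p\<in>T. (\<Sum>\<nu>\<in>VV x p. w (p ^ \<nu>) * t (p ^ \<nu>)) * r p)"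
    unfolding Th_def r_def cp_def by (simp add: sum_subtractf[symmetric] algebra_simps diff_divide_distrib flip: sum_negf)
  also have "(\<Sum>p\<in>T. (\<Sum>\<nu>\<in>VV x p. w (p ^ \<nu>) * t (p ^ \<nu>)) * r p)
      = (\<Sum>p\<in>T. \<Sum>\<nu>\<in>VV x p - {0}. w (p ^ \<nu>) * r p * t (p ^ \<nu>))"
  proof (intro sum.cong refl)
    fix p assume "p \<in> T"
    hence p: "prime p" using T_prime by blast
    have "(\<Sum>\<nu>\<in>VV x p. w (p ^ \<nu>) * t (p ^ \<nu>)) = (\<Sum>\<nu>\<in>VV x p - {0}. w (p ^ \<nu>) * t (p ^ \<nu>))"
      using sum_VV_minus0[OF p, of "\<lambda>n. w n * t n"] t1 by simp
    thus "(\<Sum>\<nu>\<in>VV x p. w (p ^ \<nu>) * t (p ^ \<nu>)) * r p = (\<Sum>\<nu>\<in>VV x p - {0}. w (p ^ \<nu>) * r p * t (p ^ \<nu>))"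
      by (simp add: sum_distrib_right sum_distrib_left algebra_simps)
  qed
  also have "\<dots> = (\<Sum>(p,\<nu>)\<in>Sg. w (p ^ \<nu>) * r p * t (p ^ \<nu>))"
    unfolding Sg_def using finite_T finS by (rule sum.Sigma)
  finally have eq: "((\<Sum>p\<in>T. cp p) - Th)\<^sup>2 = (\<Sum>(p,\<nu>)\<in>Sg. w (p ^ \<nu>) * r p * t (p ^ \<nu>))\<^sup>2"
    by (simp add: power2_eq_square)
  have h1: "(\<Sum>(p,\<nu>)\<in>Sg. w (p ^ \<nu>) * r p * t (p ^ \<nu>))\<^sup>2
     \<le> (\<Sum>(p,\<nu>)\<in>Sg. w (p ^ \<nu>) * (r p)\<^sup>2) * (\<Sum>(p,\<nu>)\<in>Sg. w (p ^ \<nu>) * (t (p ^ \<nu>))\<^sup>2)"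
    using CS_weighted[of Sg "\<lambda>i. w (fst i ^ snd i)" "\<lambda>i. r (fst i)" "\<lambda>i. t (fst i ^ snd i)"] w_nn
    by (simp add: case_prod_unfold)
  have h2: "(\<Sum>(p,\<nu>)\<in>Sg. w (p ^ \<nu>) * (t (p ^ \<nu>))\<^sup>2) = SS"
  proof -
    have "(\<Sum>(p,\<nu>)\<in>Sg. w (p ^ \<nu>) * (t (p ^ \<nu>))\<^sup>2) = (\<Sum>p\<in>T. \<Sum>\<nu>\<in>VV x p - {0}. w (p ^ \<nu>) * (t (p ^ \<nu>))\<^sup>2)"
      unfolding Sg_def using finite_T finS by (rule sum.Sigma[symmetric])
    also have "\<dots> = SS"
    proof -
      have aux: "(\<Sum>\<nu>\<in>VV x p - {0}. w (p ^ \<nu>) * (t (p ^ \<nu>))\<^sup>2) = (\<Sum>\<nu>\<in>VV x p. w (p ^ \<nu>) * (t (p ^ \<nu>))\<^sup>2)"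
        if "p \<in> T" for p
      proof -
        have "prime p" using T_prime that by blast
        thus ?thesis using sum_VV_minus0[of p "\<lambda>n. w n * (t n)\<^sup>2"] t1 by simp
      qed
      show ?thesis unfolding SS_def by (rule sum.cong) (simp_all add: aux)
    qed
    finally show ?thesis .
  qed
  have h3: "(\<Sum>(p,\<nu>)\<in>Sg. w (p ^ \<nu>) * (r p)\<^sup>2) \<le> EE"
  proof -
    have "(\<Sum>(p,\<nu>)\<in>Sg. w (p ^ \<nu>) * (r p)\<^sup>2) = (\<Sum>p\<in>T. \<Sum>\<nu>\<in>VV x p - {0}. w (p ^ \<nu>) * (r p)\<^sup>2)"
      unfolding Sg_def using finite_T finS by (rule sum.Sigma[symmetric])
    also have "\<dots> = (\<Sum>p\<in>T. (Z p - 1) * (r p)\<^sup>2)"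
      using Z_minus1 T_prime by (intro sum.cong refl) (simp add: sum_distrib_right)
    also have "\<dots> \<le> EE" unfolding EE_def
    proof (intro sum_mono)
      fix p assume p: "p \<in> T"
      have Z: "Z p - 1 \<ge> 0" using Z_ge1 T_prime p by force
      have "(r p)\<^sup>2 \<le> Z p - 1"
      proof -
        have "r p * r p \<le> r p * 1" using r01[OF p] by (intro mult_left_mono) auto
        hence "(r p)\<^sup>2 \<le> r p" by (simp add: power2_eq_square)
        thus ?thesis using r01[OF p] by simp
      qed
      thus "(Z p - 1) * (r p)\<^sup>2 \<le> (Z p - 1)\<^sup>2" using Z
        by (simp add: power2_eq_square mult_left_mono)
    qed
    finally show ?thesis .
  qed
  have SS0: "SS \<ge> 0" unfolding SS_def by (intro sum_nonneg mult_nonneg_nonneg w_nn) simp_all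
  show ?thesis using eq h1 h2 h3 mult_right_mono[OF h3 SS0] by simp
qed

end


lemma inv_sq_sum: "(\<Sum>n\<in>{2..M}. 1 / (real n)\<^sup>2) \<le> 1 - 1 / real (max 1 M)"
proof (induction M)
  case 0 thus ?case by simp
next
  case (Suc M)
  show ?case
  proof (cases "M = 0")
    case True thus ?thesis by simp
  next
    case False
    hence M1: "M \<ge> 1" by simp
    have "(\<Sum>n\<in>{2..Suc M}. 1 / (real n)\<^sup>2) = (\<Sum>n\<in>{2..M}. 1 / (real n)\<^sup>2) + 1 / (real (Suc M))\<^sup>2"
      using M1 by (simp add: sum.atLeast_Suc_atMost_Suc_shift atLeastAtMostSuc_conv)
    also have "\<dots> \<le> 1 - 1 / real M + 1 / (real (Suc M))\<^sup>2" using Suc M1 by (simp add: max_def)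
    also have "1 / (real (Suc M))\<^sup>2 \<le> 1 / real M - 1 / real (Suc M)"
    proof -
      have e: "1 / real M - 1 / real (Suc M) = 1 / (real M * real (Suc M))" using M1 by (simp add: field_simps)
      have "real M * real (Suc M) \<le> (real (Suc M))\<^sup>2" by (simp add: power2_eq_square)
      hence "1 / (real (Suc M))\<^sup>2 \<le> 1 / (real M * real (Suc M))"
        using M1 by (intro divide_left_mono) auto
      thus ?thesis using e by simp
    qed
    finally show ?thesis using M1 by (simp add: max_def)
  qed
qed

context tk
begin

definition bb :: "nat \<Rightarrow> real" where "bb p = (\<Sum>\<nu>\<in>{\<nu>\<in>VV x p. 2 \<le> \<nu>}. w (p ^ \<nu>))"

lemma classSet_eq: "{(p,\<nu>). prime p \<and> 2 \<le> \<nu> \<and> real (p ^ \<nu>) \<le> x} = Sigma T (\<lambda>p. {\<nu>\<in>VV x p. 2 \<le> \<nu>})"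
proof safe
  fix p \<nu> assume h: "prime p" "2 \<le> \<nu>" "real (p ^ \<nu>) \<le> x"
  have "p ^ 1 \<le> p ^ \<nu>" using h prime_ge_1_nat by (intro power_increasing) auto
  hence "p \<le> p ^ \<nu>" by simp
  hence "real p \<le> x" using h by linarith
  thus "p \<in> T" unfolding T_def using h by auto
  show "\<nu> \<in> VV x p" unfolding VV_def using h by auto
qed (auto simp: T_def VV_def)

lemma Z_split: assumes "p \<in> T" shows "Z p - 1 = w p + bb p"
proof -
  have p: "prime p" "real p \<le> x" using assms unfolding T_def by auto
  have fin: "finite (VV x p)" using finite_VV p by blast
  have "VV x p - {0} = insert 1 {\<nu>\<in>VV x p. 2 \<le> \<nu>}" using p unfolding VV_def by auto
  hence "(\<Sum>\<nu>\<in>VV x p - {0}. w (p ^ \<nu>)) = w p + bb p"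
    unfolding bb_def using fin by (simp add: sum.insert)
  thus ?thesis using Z_minus1 p by simp
qed

lemma bb_nn: "bb p \<ge> 0" unfolding bb_def by (intro sum_nonneg w_nn)

lemma sum_bb: "(\<Sum>p\<in>T. bb p) \<le> B / ln 4"
proof -
  have finS: "\<forall>p\<in>T. finite {\<nu>\<in>VV x p. 2 \<le> \<nu>}" using finite_VV T_prime by auto
  have "(\<Sum>p\<in>T. bb p) = (\<Sum>(p,\<nu>)\<in>Sigma T (\<lambda>p. {\<nu>\<in>VV x p. 2 \<le> \<nu>}). w (p ^ \<nu>))"
    unfolding bb_def using finite_T finS by (rule sum.Sigma)
  also have "\<dots> \<le> (\<Sum>(p,\<nu>)\<in>Sigma T (\<lambda>p. {\<nu>\<in>VV x p. 2 \<le> \<nu>}). w (p ^ \<nu>) * ln (real (p ^ \<nu>)) / ln 4)"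
  proof (intro sum_mono)
    fix i assume "i \<in> Sigma T (\<lambda>p. {\<nu>\<in>VV x p. 2 \<le> \<nu>})"
    then obtain p \<nu> where i: "i = (p,\<nu>)" "prime p" "2 \<le> \<nu>" using T_prime by blast
    have "(4::nat) \<le> p ^ \<nu>"
    proof -
      have "(2::nat) ^ 2 \<le> 2 ^ \<nu>" using i by (intro power_increasing) auto
      also have "(2::nat) ^ \<nu> \<le> p ^ \<nu>" using i prime_ge_2_nat power_mono by blast
      finally show ?thesis by simp
    qed
    hence "real (4::nat) \<le> real (p ^ \<nu>)" by (simp only: of_nat_le_iff)
    hence "ln 4 \<le> ln (real (p ^ \<nu>))" using i prime_gt_0_nat by (subst ln_le_cancel_iff) auto
    hence "w (p ^ \<nu>) * ln 4 \<le> w (p ^ \<nu>) * ln (real (p ^ \<nu>))" using w_nn by (intro mult_left_mono) auto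
    hence "w (p ^ \<nu>) \<le> w (p ^ \<nu>) * ln (real (p ^ \<nu>)) / ln 4" by (simp add: field_simps)
    thus "(case i of (p, \<nu>) \<Rightarrow> w (p ^ \<nu>)) \<le> (case i of (p, \<nu>) \<Rightarrow> w (p ^ \<nu>) * ln (real (p ^ \<nu>)) / ln 4)"
      using i by simp
  qed
  also have "\<dots> = (\<Sum>(p,\<nu>)\<in>{(p,\<nu>). prime p \<and> 2 \<le> \<nu> \<and> real (p ^ \<nu>) \<le> x}.
          lam (p ^ \<nu>) * ln (real (p ^ \<nu>)) / real (p ^ \<nu>)) / ln 4"
    unfolding classSet_eq w_def by (simp add: sum_divide_distrib case_prod_unfold)
  also have "\<dots> \<le> B / ln 4" using lamB by (intro divide_right_mono) auto
  finally show ?thesis .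
qed

end

context tkt
begin

lemma EE_bound: "EE \<le> 2 * A\<^sup>2 + 2 * (B / ln 4)\<^sup>2"
proof -
  have "EE \<le> (\<Sum>p\<in>T. 2 * (A\<^sup>2 * (1 / (real p)\<^sup>2)) + 2 * ((B / ln 4) * bb p))"
    unfolding EE_def
  proof (intro sum_mono)
    fix p assume pT: "p \<in> T"
    hence p: "prime p" "real p \<le> x" unfolding T_def by auto
    have wp: "0 \<le> w p" "w p \<le> A / real p"
      using w_nn lamA[OF p] p prime_gt_0_nat unfolding w_def by (auto simp: divide_right_mono)
    have bp: "bb p \<le> B / ln 4"
      using member_le_sum[of p T bb] bb_nn finite_T pT sum_bb by (smt (verit))
    have "(Z p - 1)\<^sup>2 = (w p + bb p)\<^sup>2" using Z_split[OF pT] by simp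
    also have "\<dots> \<le> 2 * (w p)\<^sup>2 + 2 * (bb p)\<^sup>2"
    proof -
      have "0 \<le> (w p - bb p)\<^sup>2" by simp
      thus ?thesis by (simp add: power2_eq_square algebra_simps)
    qed
    also have "(w p)\<^sup>2 \<le> (A / real p)\<^sup>2" using wp by (intro power_mono) auto
    also have "(A / real p)\<^sup>2 = A\<^sup>2 * (1 / (real p)\<^sup>2)" by (simp add: power_divide)
    also have "(bb p)\<^sup>2 \<le> (B / ln 4) * bb p"
      using mult_right_mono[OF bp bb_nn[of p]] by (simp add: power2_eq_square)
    finally show "(Z p - 1)\<^sup>2 \<le> 2 * (A\<^sup>2 * (1 / (real p)\<^sup>2)) + 2 * ((B / ln 4) * bb p)" by simp
  qed
  also have "\<dots> = 2 * A\<^sup>2 * (\<Sum>p\<in>T. 1 / (real p)\<^sup>2) + 2 * (B / ln 4) * (\<Sum>p\<in>T. bb p)"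
    by (simp add: sum.distrib sum_distrib_left mult.assoc)
  finally have e1: "EE \<le> 2 * A\<^sup>2 * (\<Sum>p\<in>T. 1 / (real p)\<^sup>2) + 2 * (B / ln 4) * (\<Sum>p\<in>T. bb p)" .
  have s1: "(\<Sum>p\<in>T. 1 / (real p)\<^sup>2) \<le> 1"
  proof -
    have "T \<subseteq> {2..nat \<lfloor>x\<rfloor>}" unfolding T_def using prime_ge_2_nat by (auto simp: le_nat_floor)
    hence "(\<Sum>p\<in>T. 1 / (real p)\<^sup>2) \<le> (\<Sum>n\<in>{2..nat \<lfloor>x\<rfloor>}. 1 / (real n)\<^sup>2)"
      by (intro sum_mono2) auto
    also have "\<dots> \<le> 1"
    proof -
      have "1 / real (max 1 (nat \<lfloor>x\<rfloor>)) \<ge> 0" by simp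
      thus ?thesis using inv_sq_sum[of "nat \<lfloor>x\<rfloor>"] by linarith
    qed
    finally show ?thesis .
  qed
  have "2 * A\<^sup>2 * (\<Sum>p\<in>T. 1 / (real p)\<^sup>2) \<le> 2 * A\<^sup>2 * 1"
    using s1 by (intro mult_left_mono) auto
  moreover have "2 * (B / ln 4) * (\<Sum>p\<in>T. bb p) \<le> 2 * (B / ln 4) * (B / ln 4)"
    using sum_bb Bpos by (intro mult_left_mono) auto
  ultimately show ?thesis using e1 by (simp add: power2_eq_square)
qed

end

context tk
begin

lemma P_prod: "(\<Sum>n\<in>NT x T. w n) = (\<Prod>p\<in>T. Z p)"
proof -
  interpret z: tkt x A B lam "\<lambda>_. 0" by unfold_locales (simp add: additive_def)
  show ?thesis using z.indC[OF finite_T T_prime] by blast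
qed

end



lemma ln_primes_dvd:
  fixes n :: nat assumes "n > 0"
  shows "(\<Sum>p\<in>{p. prime p \<and> p dvd n}. ln (real p)) \<le> ln (real n)"
proof -
  have pf: "prime_factors n = {p. prime p \<and> p dvd n}" using assms by (simp add: prime_factors_dvd)
  have fin: "finite (prime_factors n)" by simp
  have e1: "(\<Sum>p\<in>prime_factors n. ln (real p)) = ln (\<Prod>p\<in>prime_factors n. real p)"
    using fin by (subst ln_prod) (auto dest: in_prime_factors_imp_prime simp: prime_gt_0_nat)
  have "(\<Prod>p\<in>prime_factors n. real p) \<le> (\<Prod>p\<in>prime_factors n. real (p ^ multiplicity p n))"
  proof (intro prod_mono conjI)
    fix p assume p: "p \<in> prime_factors n"
    hence pp: "prime p" "p dvd n" using pf by auto
    have "multiplicity p n \<ge> 1" using pp assms by (simp add: prime_multiplicity_gt_zero_iff Suc_le_eq)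
    hence "p ^ 1 \<le> p ^ multiplicity p n" using pp prime_ge_1_nat by (intro power_increasing) auto
    thus "real p \<le> real (p ^ multiplicity p n)" by simp
  qed simp
  also have "(\<Prod>p\<in>prime_factors n. real (p ^ multiplicity p n)) = real n"
  proof -
    have "(\<Prod>p\<in>prime_factors n. p ^ multiplicity p n) = n" using prod_prime_factors[of n] assms by simp
    hence "real (\<Prod>p\<in>prime_factors n. p ^ multiplicity p n) = real n" by simp
    thus ?thesis by (simp only: of_nat_prod)
  qed
  finally have e2: "(\<Prod>p\<in>prime_factors n. real p) \<le> real n" .
  have "(\<Prod>p\<in>prime_factors n. real p) > 0"
    by (intro prod_pos) (auto simp: prime_gt_0_nat dest: in_prime_factors_imp_prime)
  hence "(\<Sum>p\<in>prime_factors n. ln (real p)) \<le> ln (real n)" unfolding e1 using e2 by simp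
  thus ?thesis using pf by simp
qed

lemma cheb_aux: "(\<Sum>p\<in>{p. prime p \<and> p \<le> N}. ln (real p) * real (N div p)) \<le> (\<Sum>k\<in>{1..N}. ln (real k))"
proof (induction N)
  case 0 thus ?case by simp
next
  case (Suc N)
  let ?S = "{p. prime p \<and> p \<le> Suc N}"
  have finS: "finite ?S" by simp
  have split: "real (Suc N div p) = real (N div p) + (if p dvd Suc N then 1 else 0)" if "p \<in> ?S" for p
    using that by (auto simp: div_Suc dvd_eq_mod_eq_0)
  have "(\<Sum>p\<in>?S. ln (real p) * real (Suc N div p)) =
      (\<Sum>p\<in>?S. ln (real p) * real (N div p)) + (\<Sum>p\<in>?S. if p dvd Suc N then ln (real p) else 0)"
    unfolding sum.distrib[symmetric] by (intro sum.cong refl) (simp add: split algebra_simps)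
  also have "(\<Sum>p\<in>?S. ln (real p) * real (N div p)) = (\<Sum>p\<in>{p. prime p \<and> p \<le> N}. ln (real p) * real (N div p))"
  proof (rule sum.mono_neutral_right)
    show "\<forall>i\<in>?S - {p. prime p \<and> p \<le> N}. ln (real i) * real (N div i) = 0" by (auto simp: le_Suc_eq)
  qed auto
  also have "(\<Sum>p\<in>?S. if p dvd Suc N then ln (real p) else 0) = (\<Sum>p\<in>{p. prime p \<and> p dvd Suc N}. ln (real p))"
  proof -
    have eqs: "{p. prime p \<and> p dvd Suc N} = {p\<in>?S. p dvd Suc N}" using dvd_imp_le by auto
    show ?thesis by (subst eqs) (rule sum.inter_filter[OF finS, symmetric])
  qed
  also have "\<dots> \<le> ln (real (Suc N))" by (rule ln_primes_dvd) simp
  finally show ?case using Suc by (simp add: add_mono)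
qed

lemma cheb:
  assumes "y \<ge> 1"
  shows "(\<Sum>p\<in>{p. prime p \<and> real p \<le> y}. ln (real p) / real p) \<le> 2 * ln y"
proof -
  define N where "N = nat \<lfloor>y\<rfloor>"
  have N1: "N \<ge> 1" unfolding N_def using assms by linarith
  have Ny: "real N \<le> y" unfolding N_def using assms by linarith
  have iff: "real p \<le> y \<longleftrightarrow> p \<le> N" for p
  proof
    assume "real p \<le> y" thus "p \<le> N" unfolding N_def by (simp add: le_nat_floor)
  next
    assume "p \<le> N" hence "real p \<le> real N" by simp
    thus "real p \<le> y" using Ny by linarith
  qed
  have set: "{p. prime p \<and> real p \<le> y} = {p. prime p \<and> p \<le> N}" using iff by auto
  have "(\<Sum>p\<in>{p. prime p \<and> p \<le> N}. ln (real p) / real p)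
      \<le> (\<Sum>p\<in>{p. prime p \<and> p \<le> N}. (2 / real N) * (ln (real p) * real (N div p)))"
  proof (intro sum_mono)
    fix p assume p: "p \<in> {p. prime p \<and> p \<le> N}"
    have p0: "p > 0" using p prime_gt_0_nat by auto
    have d1: "N div p \<ge> 1" using div_le_mono[of p N p] p p0 by simp
    have "N < p * (N div p + 1)" using p0 by (metis add.commute div_mult_mod_eq mod_less_divisor mult.commute nat_add_left_cancel_less distrib_left mult_1_right)
    hence "real N < real p * (real (N div p) + 1)" by (metis of_nat_add of_nat_less_iff of_nat_mult of_nat_1)
    hence "real N \<le> real p * (2 * real (N div p))" using d1
      by (smt (verit, best) of_nat_1 of_nat_le_iff mult_left_mono of_nat_0_le_iff)
    hence "1 / real p \<le> 2 * real (N div p) / real N" using p0 N1 by (simp add: field_simps)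
    moreover have "ln (real p) \<ge> 0" using p0 by simp
    ultimately have "ln (real p) * (1 / real p) \<le> ln (real p) * (2 * real (N div p) / real N)"
      by (intro mult_left_mono) auto
    thus "ln (real p) / real p \<le> 2 / real N * (ln (real p) * real (N div p))" by (simp add: field_simps)
  qed
  also have "\<dots> = (2 / real N) * (\<Sum>p\<in>{p. prime p \<and> p \<le> N}. ln (real p) * real (N div p))"
    by (simp add: sum_distrib_left)
  also have "\<dots> \<le> (2 / real N) * (\<Sum>k\<in>{1..N}. ln (real k))"
    by (intro mult_left_mono cheb_aux) auto
  also have "(\<Sum>k\<in>{1..N}. ln (real k)) \<le> (\<Sum>k\<in>{1..N}. ln (real N))"
    by (intro sum_mono) auto
  also have "\<dots> = real N * ln (real N)" by simp
  finally have "(\<Sum>p\<in>{p. prime p \<and> p \<le> N}. ln (real p) / real p) \<le> 2 * ln (real N)"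
    using N1 by (simp add: field_simps)
  also have "ln (real N) \<le> ln y" using N1 Ny by simp
  finally show ?thesis unfolding set by simp
qed



context tk
begin

abbreviation NN where "NN \<equiv> NT x T"

definition Wz :: "real \<Rightarrow> real" where "Wz z = (\<Sum>n\<in>NN. if real n \<le> z then w n else 0)"

definition F :: "real \<Rightarrow> real" where
  "F y = (\<Sum>p\<in>T. \<Sum>\<nu>\<in>VV x p. if real (p ^ \<nu>) \<le> y then w (p ^ \<nu>) * ln (real (p ^ \<nu>)) else 0)"

lemma finite_NN: "finite NN" using finite_NT[OF finite_T T_prime x1] .

lemma NN_ln:
  assumes "n \<in> NN"
  shows "ln (real n) = (\<Sum>p\<in>T. ln (real (p ^ multiplicity p n)))"
proof -
  have n0: "n > 0" using assms NT_pos by blast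
  have sub: "prime_factors n \<subseteq> T"
    using assms unfolding NT_def by (auto simp: in_prime_factors_iff)
  have "(\<Prod>p\<in>prime_factors n. p ^ multiplicity p n) = n" using prod_prime_factors[of n] n0 by simp
  hence rprod: "real n = (\<Prod>p\<in>prime_factors n. real (p ^ multiplicity p n))"
    by (metis of_nat_prod)
  have rn: "ln (real n) = (\<Sum>p\<in>prime_factors n. ln (real (p ^ multiplicity p n)))"
  proof -
    have "ln (\<Prod>p\<in>prime_factors n. real (p ^ multiplicity p n)) = (\<Sum>p\<in>prime_factors n. ln (real (p ^ multiplicity p n)))"
      by (rule ln_prod) (auto simp: prime_gt_0_nat in_prime_factors_iff)
    thus ?thesis by (subst rprod) simp
  qed
  also have "\<dots> = (\<Sum>p\<in>T. ln (real (p ^ multiplicity p n)))"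
  proof (rule sum.mono_neutral_left[OF finite_T sub])
    show "\<forall>i\<in>T - prime_factors n. ln (real (i ^ multiplicity i n)) = 0"
    proof
      fix i assume "i \<in> T - prime_factors n"
      hence "\<not> i dvd n" "prime i" using n0 T_prime by (auto simp: in_prime_factors_iff)
      hence "multiplicity i n = 0" using n0 by (simp add: prime_elem_multiplicity_eq_zero_iff)
      thus "ln (real (i ^ multiplicity i n)) = 0" by simp
    qed
  qed
  finally show ?thesis .
qed

lemma w_ln_nn: "w (p ^ \<nu>) * ln (real (p ^ \<nu>)) \<ge> 0" if "prime p" for p \<nu>
proof -
  have "real (p ^ \<nu>) \<ge> 1" using that prime_gt_0_nat by (simp add: Suc_le_eq)
  thus ?thesis using w_nn by (intro mult_nonneg_nonneg) auto
qed

lemma D2: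
  assumes pT: "p \<in> T"
  shows "(\<Sum>n\<in>NN. if real n \<le> z then w n * ln (real (p ^ multiplicity p n)) else 0)
     \<le> (\<Sum>\<nu>\<in>VV x p. w (p ^ \<nu>) * ln (real (p ^ \<nu>)) * (\<Sum>m\<in>NN. if real (p ^ \<nu>) * real m \<le> z then w m else 0))"
proof -
  have p: "prime p" using pT T_prime by blast
  have Tins: "T = insert p (T - {p})" using pT by blast
  have "(\<Sum>n\<in>NN. if real n \<le> z then w n * ln (real (p ^ multiplicity p n)) else 0)
     = (\<Sum>\<nu>\<in>VV x p. \<Sum>m\<in>NT x (T - {p}). if real (p ^ \<nu> * m) \<le> z then w (p ^ \<nu> * m) * ln (real (p ^ multiplicity p (p ^ \<nu> * m))) else 0)"
    by (subst Tins, subst sum_NT_insert[OF p _ x1]) auto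
  also have "\<dots> = (\<Sum>\<nu>\<in>VV x p. w (p ^ \<nu>) * ln (real (p ^ \<nu>)) * (\<Sum>m\<in>NT x (T - {p}). if real (p ^ \<nu>) * real m \<le> z then w m else 0))"
  proof (intro sum.cong refl)
    fix \<nu> assume "\<nu> \<in> VV x p"
    show "(\<Sum>m\<in>NT x (T - {p}). if real (p ^ \<nu> * m) \<le> z then w (p ^ \<nu> * m) * ln (real (p ^ multiplicity p (p ^ \<nu> * m))) else 0)
       = w (p ^ \<nu>) * ln (real (p ^ \<nu>)) * (\<Sum>m\<in>NT x (T - {p}). if real (p ^ \<nu>) * real m \<le> z then w m else 0)"
      unfolding sum_distrib_left
    proof (intro sum.cong refl)
      fix m assume m: "m \<in> NT x (T - {p})"
      have pm: "\<not> p dvd m" using NT_ndvd[OF p _ m] by simp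
      show "(if real (p ^ \<nu> * m) \<le> z then w (p ^ \<nu> * m) * ln (real (p ^ multiplicity p (p ^ \<nu> * m))) else 0)
         = w (p ^ \<nu>) * ln (real (p ^ \<nu>)) * (if real (p ^ \<nu>) * real m \<le> z then w m else 0)"
        using w_mult[OF p pm] mult_same[OF p pm] by simp
    qed
  qed
  also have "\<dots> \<le> (\<Sum>\<nu>\<in>VV x p. w (p ^ \<nu>) * ln (real (p ^ \<nu>)) * (\<Sum>m\<in>NN. if real (p ^ \<nu>) * real m \<le> z then w m else 0))"
  proof (intro sum_mono mult_left_mono w_ln_nn[OF p])
    fix \<nu>
    show "(\<Sum>m\<in>NT x (T - {p}). if real (p ^ \<nu>) * real m \<le> z then w m else 0)
        \<le> (\<Sum>m\<in>NN. if real (p ^ \<nu>) * real m \<le> z then w m else 0)"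
      by (intro sum_mono2 finite_NN NT_mono) (auto simp: w_nn)
  qed
  finally show ?thesis .
qed

end


context tk
begin

definition H :: "nat \<Rightarrow> real \<Rightarrow> real" where
  "H m z = (\<Sum>p\<in>T. \<Sum>\<nu>\<in>VV x p. if real (p ^ \<nu>) * real m \<le> z then w (p ^ \<nu>) * ln (real (p ^ \<nu>)) else 0)"

lemma D3: "(\<Sum>n\<in>NN. if real n \<le> z then w n * ln (real n) else 0) \<le> (\<Sum>m\<in>NN. w m * H m z)"
proof -
  have "(\<Sum>n\<in>NN. if real n \<le> z then w n * ln (real n) else 0)
      = (\<Sum>n\<in>NN. \<Sum>p\<in>T. if real n \<le> z then w n * ln (real (p ^ multiplicity p n)) else 0)"
  proof (intro sum.cong refl)
    fix n assume "n \<in> NN"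
    thus "(if real n \<le> z then w n * ln (real n) else 0) = (\<Sum>p\<in>T. if real n \<le> z then w n * ln (real (p ^ multiplicity p n)) else 0)"
      using NN_ln by (simp add: sum_distrib_left)
  qed
  also have "\<dots> = (\<Sum>p\<in>T. \<Sum>n\<in>NN. if real n \<le> z then w n * ln (real (p ^ multiplicity p n)) else 0)"
    by (rule sum.swap)
  also have "\<dots> \<le> (\<Sum>p\<in>T. \<Sum>\<nu>\<in>VV x p. w (p ^ \<nu>) * ln (real (p ^ \<nu>)) * (\<Sum>m\<in>NN. if real (p ^ \<nu>) * real m \<le> z then w m else 0))"
    by (intro sum_mono D2)
  also have "\<dots> = (\<Sum>p\<in>T. \<Sum>\<nu>\<in>VV x p. \<Sum>m\<in>NN. w m * (if real (p ^ \<nu>) * real m \<le> z then w (p ^ \<nu>) * ln (real (p ^ \<nu>)) else 0))"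
    by (intro sum.cong refl) (simp add: sum_distrib_left mult_ac if_distrib cong: if_cong)
  also have "\<dots> = (\<Sum>p\<in>T. \<Sum>m\<in>NN. \<Sum>\<nu>\<in>VV x p. w m * (if real (p ^ \<nu>) * real m \<le> z then w (p ^ \<nu>) * ln (real (p ^ \<nu>)) else 0))"
    by (intro sum.cong refl sum.swap)
  also have "\<dots> = (\<Sum>m\<in>NN. \<Sum>p\<in>T. \<Sum>\<nu>\<in>VV x p. w m * (if real (p ^ \<nu>) * real m \<le> z then w (p ^ \<nu>) * ln (real (p ^ \<nu>)) else 0))"
    by (rule sum.swap)
  also have "\<dots> = (\<Sum>m\<in>NN. w m * H m z)"
    unfolding H_def by (simp add: sum_distrib_left)
  finally show ?thesis .
qed

lemma H_eq: assumes "m > 0" shows "H m z = F (z / real m)"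
  unfolding H_def F_def using assms by (intro sum.cong refl) (simp add: pos_le_divide_eq)

lemma F_le_full: "F y \<le> (\<Sum>p\<in>T. \<Sum>\<nu>\<in>VV x p. w (p ^ \<nu>) * ln (real (p ^ \<nu>)))"
  unfolding F_def using w_ln_nn T_prime by (intro sum_mono) auto

lemma F_neg: assumes "y < 1" shows "F y = 0"
proof -
  have "real (p ^ \<nu>) \<ge> 1" if "p \<in> T" for p \<nu>
    using that T_prime prime_gt_0_nat by (simp add: Suc_le_eq)
  hence h: "(if real (p ^ \<nu>) \<le> y then w (p ^ \<nu>) * ln (real (p ^ \<nu>)) else 0) = 0" if "p \<in> T" for p \<nu>
    using that assms by (smt (verit))
  show ?thesis unfolding F_def by (intro sum.neutral ballI) (blast intro: h)
qed

lemma finite_primes_le: "finite {p::nat. prime p \<and> real p \<le> y}"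
proof -
  have "{p::nat. prime p \<and> real p \<le> y} \<subseteq> {..nat \<lfloor>y\<rfloor>}" by (auto simp: le_nat_floor)
  thus ?thesis using finite_subset by blast
qed

lemma F_bound: assumes y: "y \<ge> 1" shows "F y \<le> 2 * A * ln y + B"
proof -
  define a where "a p \<nu> = w (p ^ \<nu>) * ln (real (p ^ \<nu>))" for p \<nu>
  have inner: "(\<Sum>\<nu>\<in>VV x p. if real (p ^ \<nu>) \<le> y then a p \<nu> else 0)
      \<le> (if real p \<le> y then a p 1 else 0) + (\<Sum>\<nu>\<in>{\<nu>\<in>VV x p. 2 \<le> \<nu>}. a p \<nu>)" if pT: "p \<in> T" for p
  proof -
    have p: "prime p" "real p \<le> x" using pT unfolding T_def by auto
    have VVeq: "VV x p = insert 0 (insert 1 {\<nu>\<in>VV x p. 2 \<le> \<nu>})" using p x1 unfolding VV_def by auto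
    have fin: "finite {\<nu>\<in>VV x p. 2 \<le> \<nu>}" using finite_VV[OF p(1)] by simp
    have "(\<Sum>\<nu>\<in>VV x p. if real (p ^ \<nu>) \<le> y then a p \<nu> else 0)
        = (if real (p ^ 0) \<le> y then a p 0 else 0) + ((if real (p ^ 1) \<le> y then a p 1 else 0)
          + (\<Sum>\<nu>\<in>{\<nu>\<in>VV x p. 2 \<le> \<nu>}. if real (p ^ \<nu>) \<le> y then a p \<nu> else 0))"
      by (subst VVeq) (simp add: fin)
    also have "a p 0 = 0" unfolding a_def by simp
    also have "(\<Sum>\<nu>\<in>{\<nu>\<in>VV x p. 2 \<le> \<nu>}. if real (p ^ \<nu>) \<le> y then a p \<nu> else 0) \<le> (\<Sum>\<nu>\<in>{\<nu>\<in>VV x p. 2 \<le> \<nu>}. a p \<nu>)"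
      using w_ln_nn[OF p(1)] unfolding a_def by (intro sum_mono) auto
    finally show ?thesis by simp
  qed
  have "F y \<le> (\<Sum>p\<in>T. (if real p \<le> y then a p 1 else 0) + (\<Sum>\<nu>\<in>{\<nu>\<in>VV x p. 2 \<le> \<nu>}. a p \<nu>))"
    unfolding F_def a_def[symmetric] by (intro sum_mono inner)
  also have "\<dots> = (\<Sum>p\<in>T. if real p \<le> y then a p 1 else 0) + (\<Sum>p\<in>T. \<Sum>\<nu>\<in>{\<nu>\<in>VV x p. 2 \<le> \<nu>}. a p \<nu>)"
    by (rule sum.distrib)
  also have "(\<Sum>p\<in>T. \<Sum>\<nu>\<in>{\<nu>\<in>VV x p. 2 \<le> \<nu>}. a p \<nu>) \<le> B"
  proof -
    have finS: "\<forall>p\<in>T. finite {\<nu>\<in>VV x p. 2 \<le> \<nu>}" using finite_VV T_prime by auto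
    have "(\<Sum>p\<in>T. \<Sum>\<nu>\<in>{\<nu>\<in>VV x p. 2 \<le> \<nu>}. a p \<nu>) = (\<Sum>(p,\<nu>)\<in>Sigma T (\<lambda>p. {\<nu>\<in>VV x p. 2 \<le> \<nu>}). a p \<nu>)"
      using finite_T finS by (rule sum.Sigma)
    also have "\<dots> = (\<Sum>(p,\<nu>)\<in>{(p,\<nu>). prime p \<and> 2 \<le> \<nu> \<and> real (p ^ \<nu>) \<le> x}.
          lam (p ^ \<nu>) * ln (real (p ^ \<nu>)) / real (p ^ \<nu>))"
      unfolding classSet_eq a_def w_def by (simp add: case_prod_unfold)
    also have "\<dots> \<le> B" by (rule lamB)
    finally show ?thesis .
  qed
  also have "(\<Sum>p\<in>T. if real p \<le> y then a p 1 else 0) \<le> 2 * A * ln y"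
  proof -
    have "(\<Sum>p\<in>T. if real p \<le> y then a p 1 else 0) = (\<Sum>p\<in>{p\<in>T. real p \<le> y}. a p 1)"
      by (rule sum.inter_filter[OF finite_T, symmetric])
    also have "\<dots> \<le> (\<Sum>p\<in>{p\<in>T. real p \<le> y}. A * (ln (real p) / real p))"
    proof (intro sum_mono)
      fix p assume "p \<in> {p\<in>T. real p \<le> y}"
      hence p: "prime p" "real p \<le> x" unfolding T_def by auto
      have "w p \<le> A / real p" using lamA[OF p] unfolding w_def by (simp add: divide_right_mono)
      moreover have "ln (real p) \<ge> 0" using prime_ge_1_nat[OF p(1)] by simp
      ultimately have "w p * ln (real p) \<le> A / real p * ln (real p)" by (intro mult_right_mono)
      thus "a p 1 \<le> A * (ln (real p) / real p)" unfolding a_def by simp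
    qed
    also have "\<dots> \<le> (\<Sum>p\<in>{p. prime p \<and> real p \<le> y}. A * (ln (real p) / real p))"
    proof (intro sum_mono2 finite_primes_le)
      show "{p \<in> T. real p \<le> y} \<subseteq> {p. prime p \<and> real p \<le> y}" by (auto simp: T_def)
      fix p assume "p \<in> {p. prime p \<and> real p \<le> y} - {p \<in> T. real p \<le> y}"
      hence "prime p" by auto
      hence "ln (real p) \<ge> 0" "real p > 0" using prime_ge_1_nat[of p] by auto
      thus "0 \<le> A * (ln (real p) / real p)" using Apos by simp
    qed
    also have "\<dots> = A * (\<Sum>p\<in>{p. prime p \<and> real p \<le> y}. ln (real p) / real p)"
      by (simp add: sum_distrib_left)
    also have "\<dots> \<le> A * (2 * ln y)" using cheb[OF y] Apos by (intro mult_left_mono) auto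
    finally show ?thesis by simp
  qed
  finally show ?thesis by simp
qed

end


context tk
begin

definition PP :: real where "PP = (\<Sum>n\<in>NN. w n)"
definition KK :: real where "KK = 2 * A * ln x + B"

lemma KK_pos: "KK > 0"
proof -
  have "ln x \<ge> 0" using x1 by simp
  hence "2 * A * ln x \<ge> 0" using Apos by simp
  thus ?thesis unfolding KK_def using Bpos by simp
qed

lemma NN_ge1: "n \<in> NN \<Longrightarrow> real n \<ge> 1" using NT_pos by (fastforce simp: Suc_le_eq)

lemma F_full: "F y \<le> KK"
proof -
  have "F y \<le> (\<Sum>p\<in>T. \<Sum>\<nu>\<in>VV x p. w (p ^ \<nu>) * ln (real (p ^ \<nu>)))" by (rule F_le_full)
  also have "\<dots> = F x" unfolding F_def by (intro sum.cong refl) (auto simp: VV_def)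
  also have "\<dots> \<le> KK" unfolding KK_def using F_bound[OF x1] .
  finally show ?thesis .
qed

lemma Dlog: "(\<Sum>n\<in>NN. if real n \<le> z then w n * ln (real n) else 0)
   \<le> (\<Sum>m\<in>NN. if real m \<le> z then w m * (2 * A * ln (z / real m) + B) else 0)"
proof -
  have "(\<Sum>n\<in>NN. if real n \<le> z then w n * ln (real n) else 0) \<le> (\<Sum>m\<in>NN. w m * H m z)" by (rule D3)
  also have "\<dots> \<le> (\<Sum>m\<in>NN. if real m \<le> z then w m * (2 * A * ln (z / real m) + B) else 0)"
  proof (intro sum_mono)
    fix m assume m: "m \<in> NN"
    have m0: "m > 0" "real m \<ge> 1" using m NT_pos NN_ge1 by auto
    show "w m * H m z \<le> (if real m \<le> z then w m * (2 * A * ln (z / real m) + B) else 0)"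
    proof (cases "real m \<le> z")
      case True
      hence "z / real m \<ge> 1" using m0 by simp
      hence "F (z / real m) \<le> 2 * A * ln (z / real m) + B" by (rule F_bound)
      thus ?thesis using True H_eq[OF m0(1)] w_nn by (simp add: mult_left_mono)
    next
      case False
      hence "z / real m < 1" using m0 by simp
      thus ?thesis using False H_eq[OF m0(1)] F_neg by simp
    qed
  qed
  finally show ?thesis .
qed

lemma tail_ln: "(\<Sum>n\<in>NN. w n * ln (real n)) \<le> KK * PP"
proof -
  define z where "z = real (\<Sum>n\<in>NN. n)"
  have zn: "real n \<le> z" if "n \<in> NN" for n
  proof -
    have "n \<le> (\<Sum>n\<in>NN. n)" using member_le_sum[OF that _ finite_NN, of id] by simp
    thus ?thesis unfolding z_def by (simp only: of_nat_le_iff)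
  qed
  have "(\<Sum>n\<in>NN. w n * ln (real n)) = (\<Sum>n\<in>NN. if real n \<le> z then w n * ln (real n) else 0)"
    using zn by (intro sum.cong refl) auto
  also have "\<dots> \<le> (\<Sum>m\<in>NN. w m * H m z)" by (rule D3)
  also have "\<dots> \<le> (\<Sum>m\<in>NN. w m * KK)"
  proof (intro sum_mono mult_left_mono w_nn)
    fix m assume "m \<in> NN"
    hence "m > 0" using NT_pos by blast
    thus "H m z \<le> KK" using H_eq F_full by simp
  qed
  also have "\<dots> = KK * PP" unfolding PP_def by (simp add: sum_distrib_left mult.commute)
  finally show ?thesis .
qed

lemma PP_le_tail: "PP \<le> 2 * Wz (exp (2 * KK))"
proof -
  define Z1 where "Z1 = exp (2 * KK)"
  have lnZ1: "ln Z1 = 2 * KK" unfolding Z1_def by simp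
  have "PP - Wz Z1 = (\<Sum>n\<in>NN. if real n \<le> Z1 then 0 else w n)"
    unfolding PP_def Wz_def by (simp add: sum_subtractf[symmetric]) (intro sum.cong refl, auto)
  also have "\<dots> \<le> (\<Sum>n\<in>NN. w n * ln (real n) / (2 * KK))"
  proof (intro sum_mono)
    fix n assume n: "n \<in> NN"
    have n1: "real n \<ge> 1" using NN_ge1[OF n] .
    show "(if real n \<le> Z1 then 0 else w n) \<le> w n * ln (real n) / (2 * KK)"
    proof (cases "real n \<le> Z1")
      case True thus ?thesis using n1 w_nn[of n] KK_pos by simp
    next
      case False
      hence "Z1 < real n" by simp
      moreover have "Z1 > 0" unfolding Z1_def by simp
      ultimately have "ln Z1 < ln (real n)" by simp
      hence "2 * KK \<le> ln (real n)" using lnZ1 by simp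
      hence "w n * (2 * KK) \<le> w n * ln (real n)" using w_nn by (intro mult_left_mono) auto
      thus ?thesis using False KK_pos by (simp add: field_simps)
    qed
  qed
  also have "\<dots> = (\<Sum>n\<in>NN. w n * ln (real n)) / (2 * KK)" by (simp add: sum_divide_distrib)
  also have "\<dots> \<le> KK * PP / (2 * KK)" using tail_ln KK_pos by (intro divide_right_mono) auto
  also have "\<dots> = PP / 2" using KK_pos by simp
  finally show ?thesis unfolding Z1_def by simp
qed

end


context tk
begin

lemma Wz_mono: "z \<le> z' \<Longrightarrow> Wz z \<le> Wz z'"
  unfolding Wz_def by (intro sum_mono) (auto simp: w_nn)

lemma Wz_nn: "Wz z \<ge> 0"
  unfolding Wz_def by (intro sum_nonneg) (auto simp: w_nn)

lemma step1:
  assumes z1: "1 \<le> z" and zz: "z \<le> z'"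
  shows "ln z' * Wz z' \<le> (2 * A + 1) * (Wz z * ln z' + (Wz z' - Wz z) * ln (z' / z)) + B * Wz z'"
proof -
  have z'0: "z' > 0" using z1 zz by simp
  have "ln z' * Wz z' = (\<Sum>n\<in>NN. if real n \<le> z' then w n * ln (real n) + w n * ln (z' / real n) else 0)"
    unfolding Wz_def sum_distrib_left
  proof (intro sum.cong refl)
    fix n assume "n \<in> NN"
    hence n1: "real n \<ge> 1" by (rule NN_ge1)
    have h: "ln z' = ln (real n) + ln (z' / real n)" using n1 z'0 by (simp add: ln_div)
    show "ln z' * (if real n \<le> z' then w n else 0) = (if real n \<le> z' then w n * ln (real n) + w n * ln (z' / real n) else 0)"
      by (subst h) (simp add: algebra_simps)
  qed
  also have "\<dots> = (\<Sum>n\<in>NN. if real n \<le> z' then w n * ln (real n) else 0) + (\<Sum>n\<in>NN. if real n \<le> z' then w n * ln (z' / real n) else 0)"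
    by (simp add: sum.distrib[symmetric] if_distrib cong: if_cong)
  also have "\<dots> \<le> (\<Sum>m\<in>NN. if real m \<le> z' then w m * (2 * A * ln (z' / real m) + B) else 0) + (\<Sum>n\<in>NN. if real n \<le> z' then w n * ln (z' / real n) else 0)"
    using Dlog by simp
  also have "\<dots> = (2 * A + 1) * (\<Sum>n\<in>NN. if real n \<le> z' then w n * ln (z' / real n) else 0) + B * Wz z'"
    unfolding Wz_def sum_distrib_left sum.distrib[symmetric] by (intro sum.cong refl) (simp add: algebra_simps)
  also have "(\<Sum>n\<in>NN. if real n \<le> z' then w n * ln (z' / real n) else 0) \<le> Wz z * ln z' + (Wz z' - Wz z) * ln (z' / z)"
  proof -
    have "(\<Sum>n\<in>NN. if real n \<le> z' then w n * ln (z' / real n) else 0)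
      \<le> (\<Sum>n\<in>NN. (if real n \<le> z then w n else 0) * ln z' + ((if real n \<le> z' then w n else 0) - (if real n \<le> z then w n else 0)) * ln (z' / z))"
    proof (intro sum_mono)
      fix n assume "n \<in> NN"
      hence n1: "real n \<ge> 1" by (rule NN_ge1)
      show "(if real n \<le> z' then w n * ln (z' / real n) else 0)
        \<le> (if real n \<le> z then w n else 0) * ln z' + ((if real n \<le> z' then w n else 0) - (if real n \<le> z then w n else 0)) * ln (z' / z)"
      proof (cases "real n \<le> z")
        case True
        have "ln (z' / real n) \<le> ln z'" using n1 z'0 by (simp add: ln_div)
        thus ?thesis using True zz w_nn[of n] by (simp add: mult_left_mono)
      next
        case False
        show ?thesis
        proof (cases "real n \<le> z'")
          case True
          have "z' / real n \<le> z' / z" using False z1 z'0 by (intro divide_left_mono) auto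
          moreover have "z' / real n > 0" using n1 z'0 by simp
          ultimately have "ln (z' / real n) \<le> ln (z' / z)" by (subst ln_le_cancel_iff) auto
          thus ?thesis using True False w_nn[of n] by (simp add: mult_left_mono)
        qed (use False in simp)
      qed
    qed
    also have "\<dots> = Wz z * ln z' + (Wz z' - Wz z) * ln (z' / z)"
      unfolding Wz_def by (simp add: sum.distrib sum_distrib_right[symmetric] sum_subtractf[symmetric])
    finally show ?thesis .
  qed
  finally show ?thesis
    using Apos by (smt (verit) mult_left_mono)
qed


lemma step2:
  assumes z1: "1 \<le> z" and zB: "4 * B \<le> ln z"
  shows "Wz (exp ((1 + 1 / (4 * A + 2)) * ln z)) \<le> (12 * A + 6) * Wz z"
proof -
  define a where "a = 2 * A + 1"
  define e where "e = 1 / (4 * A + 2)"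
  define L where "L = ln z"
  define z' where "z' = exp ((1 + e) * L)"
  define X where "X = Wz z'"
  define Y where "Y = Wz z"
  have a1: "a \<ge> 1" unfolding a_def using Apos by simp
  have e0: "e > 0" "e \<le> 1/2" unfolding e_def using Apos by (auto simp: field_simps)
  have L0: "L > 0" unfolding L_def using zB Bpos by simp
  have zexp: "z = exp L" unfolding L_def using z1 by simp
  have lz: "ln z' = (1 + e) * L" unfolding z'_def by simp
  have zz': "z \<le> z'" unfolding z'_def zexp using e0 L0 by (simp add: mult_le_cancel_right1)
  have z'0: "z' > 0" unfolding z'_def by simp
  have d: "ln (z' / z) = e * L" using zexp lz L0 z1 z'0 by (simp add: ln_div algebra_simps)
  have ad: "a * (e * L) = L / 2" unfolding a_def e_def using Apos by (simp add: field_simps)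
  have X0: "X \<ge> 0" "Y \<ge> 0" unfolding X_def Y_def by (simp_all add: Wz_nn)
  have s1: "((1 + e) * L) * X \<le> a * (Y * ((1 + e) * L) + (X - Y) * (e * L)) + B * X"
    using step1[OF z1 zz'] unfolding X_def Y_def a_def lz d .
  have s2: "a * (Y * ((1 + e) * L) + (X - Y) * (e * L)) = a * Y * ((1 + e) * L) + (a * (e * L)) * X - (a * (e * L)) * Y"
    by (simp add: algebra_simps)
  have s3: "((1 + e) * L) * X \<le> a * Y * ((1 + e) * L) + (L / 2) * X - (L / 2) * Y + B * X"
    using s1 s2 ad by simp
  have s4: "L * X \<le> ((1 + e) * L) * X" using e0 L0 X0 by (intro mult_right_mono) auto
  have s5: "(L / 2) * Y \<ge> 0" using L0 X0 by simp
  have s6: "a * Y * ((1 + e) * L) \<le> a * Y * ((3 / 2) * L)"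
    using e0 L0 X0 a1 by (intro mult_left_mono) auto
  have s7: "B * X \<le> (L / 4) * X" using zB X0 unfolding L_def by (intro mult_right_mono) auto
  have s8: "L * X \<le> a * Y * ((3 / 2) * L) + (L / 2) * X + (L / 4) * X" using s3 s4 s5 s6 s7 by linarith
  have s9: "L * X = 4 * ((L / 4) * X)" "(L / 2) * X = 2 * ((L / 4) * X)" by simp_all
  have "(L / 4) * X \<le> a * Y * ((3 / 2) * L)" using s8 s9 by linarith
  also have "\<dots> = (L / 4) * (6 * a * Y)" by (simp add: algebra_simps)
  finally have "(L / 4) * X \<le> (L / 4) * (6 * a * Y)" .
  hence "X \<le> 6 * a * Y" using L0 by (simp add: mult_le_cancel_left_pos mult_ac)
  thus ?thesis unfolding X_def Y_def z'_def e_def L_def a_def by (simp add: algebra_simps)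
qed

end


definition CD :: "real \<Rightarrow> real \<Rightarrow> real" where
  "CD A B = max (2 * (12 * A + 6) ^ nat \<lceil>4 * A * (4 * A + 2)\<rceil>) ((1 + A + B / ln 4) ^ nat \<lceil>exp (4 * B)\<rceil>)"

context tk
begin

lemma one_NN: "1 \<in> NN" unfolding NT_def by auto

lemma Wz_ge1: "Wz x \<ge> 1"
proof -
  have "(if real 1 \<le> x then w 1 else 0) \<le> Wz x"
    unfolding Wz_def by (rule member_le_sum[OF one_NN]) (auto simp: w_nn finite_NN)
  thus ?thesis using x1 w1 by simp
qed

lemma iter:
  assumes xB: "4 * B \<le> ln x"
  shows "Wz (exp ((1 + 1 / (4 * A + 2)) ^ j * ln x)) \<le> (12 * A + 6) ^ j * Wz x"
proof (induction j)
  case 0 thus ?case using x1 by simp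
next
  case (Suc j)
  define e where "e = 1 / (4 * A + 2)"
  define z where "z = exp ((1 + e) ^ j * ln x)"
  have e0: "e \<ge> 0" unfolding e_def using Apos by simp
  have lnx: "ln x \<ge> 0" using x1 by simp
  have pj: "(1 + e) ^ j \<ge> 1" using e0 by (simp add: one_le_power)
  have lz: "ln z = (1 + e) ^ j * ln x" unfolding z_def by simp
  have lz2: "ln z \<ge> ln x" unfolding lz using pj lnx by (simp add: mult_le_cancel_right1)
  have z1: "z \<ge> 1" using lz2 lnx unfolding z_def by simp
  have eq: "exp ((1 + e) ^ Suc j * ln x) = exp ((1 + e) * ln z)" unfolding lz by (simp add: mult.assoc)
  have zB: "4 * B \<le> ln z" using lz2 xB by linarith
  have st: "Wz (exp ((1 + e) * ln z)) \<le> (12 * A + 6) * Wz z" unfolding e_def by (rule step2[OF z1 zB])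
  have "Wz (exp ((1 + e) ^ Suc j * ln x)) \<le> (12 * A + 6) * Wz z" unfolding eq by (rule st)
  also have "\<dots> \<le> (12 * A + 6) * ((12 * A + 6) ^ j * Wz x)"
    using Suc Apos unfolding z_def e_def by (intro mult_left_mono) auto
  finally show ?case unfolding e_def by simp
qed

lemma PP_big:
  assumes xB: "4 * B \<le> ln x"
  shows "PP \<le> 2 * (12 * A + 6) ^ nat \<lceil>4 * A * (4 * A + 2)\<rceil> * Wz x"
proof -
  define e where "e = 1 / (4 * A + 2)"
  define k where "k = nat \<lceil>4 * A * (4 * A + 2)\<rceil>"
  have e0: "e > 0" unfolding e_def using Apos by simp
  have lnx: "ln x \<ge> 0" using x1 by simp
  have "real k \<ge> 4 * A * (4 * A + 2)" unfolding k_def by linarith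
  hence "real k * e \<ge> 4 * A" unfolding e_def using Apos by (simp add: field_simps)
  moreover have "1 + real k * e \<le> (1 + e) ^ k" using e0 by (intro Bernoulli_inequality) simp
  ultimately have pk: "(1 + e) ^ k \<ge> 1 + 4 * A" by simp
  have "2 * KK \<le> (1 + 4 * A) * ln x" unfolding KK_def using xB Bpos by (simp add: algebra_simps)
  also have "\<dots> \<le> (1 + e) ^ k * ln x" using pk lnx by (intro mult_right_mono) auto
  finally have "exp (2 * KK) \<le> exp ((1 + e) ^ k * ln x)" by simp
  hence "Wz (exp (2 * KK)) \<le> Wz (exp ((1 + e) ^ k * ln x))" by (rule Wz_mono)
  also have "\<dots> \<le> (12 * A + 6) ^ k * Wz x" unfolding e_def using iter[OF xB] .
  finally show ?thesis using PP_le_tail unfolding k_def by simp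
qed

lemma PP_small:
  assumes xB: "ln x < 4 * B"
  shows "PP \<le> (1 + A + B / ln 4) ^ nat \<lceil>exp (4 * B)\<rceil> * Wz x"
proof -
  define c0 where "c0 = 1 + A + B / ln 4"
  have c01: "c0 \<ge> 1" unfolding c0_def using Apos Bpos by simp
  have Zle: "0 \<le> Z p \<and> Z p \<le> c0" if pT: "p \<in> T" for p
  proof -
    have p: "prime p" "real p \<le> x" using pT unfolding T_def by auto
    have "w p \<le> A / real p" using lamA[OF p] unfolding w_def by (simp add: divide_right_mono)
    also have "\<dots> \<le> A" using Apos prime_ge_1_nat[OF p(1)] by (simp add: divide_le_eq)
    finally have wp: "w p \<le> A" .
    have bp: "bb p \<le> B / ln 4"
      using member_le_sum[of p T bb] bb_nn finite_T pT sum_bb by (smt (verit))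
    show ?thesis using Z_split[OF pT] wp bp Z_ge1[OF p(1)] unfolding c0_def by simp
  qed
  have "PP = (\<Prod>p\<in>T. Z p)" unfolding PP_def by (rule P_prod)
  also have "\<dots> \<le> (\<Prod>p\<in>T. c0)" by (intro prod_mono) (use Zle in auto)
  also have "\<dots> = c0 ^ card T" by simp
  also have "\<dots> \<le> c0 ^ nat \<lceil>exp (4 * B)\<rceil>"
  proof (intro power_increasing c01)
    have "T \<subseteq> {1..nat \<lfloor>x\<rfloor>}" unfolding T_def using prime_ge_1_nat by (auto simp: le_nat_floor)
    hence "card T \<le> nat \<lfloor>x\<rfloor>" using card_mono[of "{1..nat \<lfloor>x\<rfloor>}" T] by simp
    moreover have "x < exp (4 * B)" using xB x1 by (metis exp_less_cancel_iff exp_ln less_le_trans zero_less_one)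
    hence "nat \<lfloor>x\<rfloor> \<le> nat \<lceil>exp (4 * B)\<rceil>" by (intro nat_mono) linarith
    ultimately show "card T \<le> nat \<lceil>exp (4 * B)\<rceil>" by linarith
  qed
  also have "\<dots> \<le> c0 ^ nat \<lceil>exp (4 * B)\<rceil> * Wz x"
    using Wz_ge1 c01 by (simp add: mult_le_cancel_left1)
  finally show ?thesis unfolding c0_def .
qed

lemma PP_bound: "PP \<le> CD A B * Wz x"
proof (cases "4 * B \<le> ln x")
  case True
  hence "PP \<le> 2 * (12 * A + 6) ^ nat \<lceil>4 * A * (4 * A + 2)\<rceil> * Wz x" by (rule PP_big)
  also have "\<dots> \<le> CD A B * Wz x" unfolding CD_def using Wz_nn by (intro mult_right_mono) auto
  finally show ?thesis .
next
  case False
  hence "PP \<le> (1 + A + B / ln 4) ^ nat \<lceil>exp (4 * B)\<rceil> * Wz x" by (intro PP_small) simp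
  also have "\<dots> \<le> CD A B * Wz x" unfolding CD_def using Wz_nn by (intro mult_right_mono) auto
  finally show ?thesis .
qed

end


context tk
begin

lemma small_in_NN: "{n. 1 \<le> n \<and> real n \<le> x} \<subseteq> NN"
proof
  fix n assume n: "n \<in> {n. 1 \<le> n \<and> real n \<le> x}"
  hence n0: "n > 0" "real n \<le> x" by auto
  show "n \<in> NN" unfolding NT_def
  proof (safe)
    show "0 < n" by fact
  next
    fix p assume p: "prime p" "p dvd n"
    hence "p \<le> n" using n0 by (simp add: dvd_imp_le)
    hence "real p \<le> x" using n0 by linarith
    thus "p \<in> T" unfolding T_def using p by auto
  next
    fix p assume p: "prime p" "p dvd n"
    have "p ^ multiplicity p n dvd n" by (rule multiplicity_dvd)
    hence "p ^ multiplicity p n \<le> n" using n0 by (simp add: dvd_imp_le)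
    thus "real (p ^ multiplicity p n) \<le> x" using n0 by (metis of_nat_le_iff order_trans)
  qed
qed

lemma Wz_x: "Wz x = (\<Sum>n\<in>{n. 1 \<le> n \<and> real n \<le> x}. w n)"
proof -
  have "Wz x = (\<Sum>n\<in>{n\<in>NN. real n \<le> x}. w n)"
    unfolding Wz_def by (rule sum.inter_filter[OF finite_NN, symmetric])
  also have "{n\<in>NN. real n \<le> x} = {n. 1 \<le> n \<and> real n \<le> x}"
    using small_in_NN NN_ge1 by fastforce
  finally show ?thesis .
qed

lemma primepow_reindex:
  assumes f1: "f 1 = 0"
  shows "(\<Sum>q\<in>{q. primepow q \<and> real q \<le> x}. f q) = (\<Sum>p\<in>T. \<Sum>\<nu>\<in>VV x p. f (p ^ \<nu>))"
proof -
  define Sg where "Sg = Sigma T (\<lambda>p. VV x p - {0})"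
  have finS: "\<forall>p\<in>T. finite (VV x p - {0})" using finite_VV T_prime by blast
  have "(\<Sum>p\<in>T. \<Sum>\<nu>\<in>VV x p. f (p ^ \<nu>)) = (\<Sum>p\<in>T. \<Sum>\<nu>\<in>VV x p - {0}. f (p ^ \<nu>))"
  proof (rule sum.cong[OF refl])
    fix p assume "p \<in> T"
    hence "prime p" using T_prime by blast
    from sum_VV_minus0[of p f, OF this f1] show "(\<Sum>\<nu>\<in>VV x p. f (p ^ \<nu>)) = (\<Sum>\<nu>\<in>VV x p - {0}. f (p ^ \<nu>))" by simp
  qed
  also have "\<dots> = (\<Sum>(p,\<nu>)\<in>Sg. f (p ^ \<nu>))" unfolding Sg_def using finite_T finS by (rule sum.Sigma)
  also have "\<dots> = (\<Sum>q\<in>{q. primepow q \<and> real q \<le> x}. f q)"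
  proof -
    have bij: "bij_betw (\<lambda>i. fst i ^ snd i) Sg {q. primepow q \<and> real q \<le> x}"
    proof (rule bij_betwI')
      fix i j assume i: "i \<in> Sg" and j: "j \<in> Sg"
      then obtain p \<nu> p' \<nu>' where ij: "i = (p,\<nu>)" "j = (p',\<nu>')" "prime p" "prime p'" "\<nu> > 0" "\<nu>' > 0"
        unfolding Sg_def T_def by auto
      show "(fst i ^ snd i = fst j ^ snd j) = (i = j)"
        using ij prime_power_inj'[of p p' \<nu> \<nu>'] by auto
    next
      fix i assume "i \<in> Sg"
      then obtain p \<nu> where i: "i = (p,\<nu>)" "prime p" "\<nu> > 0" "real (p ^ \<nu>) \<le> x"
        unfolding Sg_def T_def VV_def by auto
      show "fst i ^ snd i \<in> {q. primepow q \<and> real q \<le> x}"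
        using i by (auto simp: primepow_def)
    next
      fix q assume "q \<in> {q. primepow q \<and> real q \<le> x}"
      then obtain p k where q: "prime p" "k > 0" "q = p ^ k" "real q \<le> x" by (auto simp: primepow_def)
      have "p ^ 1 \<le> p ^ k" using q prime_ge_1_nat by (intro power_increasing) auto
      hence "real p \<le> x" using q by (metis of_nat_le_iff order_trans power_one_right)
      hence pT: "p \<in> T" unfolding T_def using q(1) by simp
      have "real (p ^ k) \<le> x" using q(3,4) by simp
      hence "k \<in> VV x p - {0}" unfolding VV_def using q(2) by simp
      hence pk: "(p,k) \<in> Sg" unfolding Sg_def using pT by simp
      show "\<exists>i\<in>Sg. q = fst i ^ snd i"
      proof (rule bexI[of _ "(p,k)"])
        show "q = fst (p,k) ^ snd (p,k)" using q(3) by simp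
      qed (rule pk)
    qed
    from sum.reindex_bij_betw[OF bij, of f] show ?thesis by (simp add: case_prod_unfold)
  qed
  finally show ?thesis by simp
qed

end

context tkt
begin

lemma varC_final: "(\<Sum>n\<in>NN. w n * (t n - Th)\<^sup>2) \<le> PP * (1 + EE) * SS"
proof -
  define c where "c = (\<Sum>p\<in>T. cp p)"
  have I: "(\<Sum>n\<in>NN. w n * (t n - c)) = 0" "(\<Sum>n\<in>NN. w n * (t n - c)\<^sup>2) = PP * (\<Sum>p\<in>T. D p)"
    using indC[OF finite_T T_prime] P_prod unfolding c_def PP_def by auto
  have PP0: "PP \<ge> 0" unfolding PP_def by (intro sum_nonneg w_nn)
  have SS0: "SS \<ge> 0" unfolding SS_def by (intro sum_nonneg mult_nonneg_nonneg w_nn) simp_all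
  have "(\<Sum>n\<in>NN. w n * (t n - Th)\<^sup>2) = (\<Sum>n\<in>NN. w n * (t n - c)\<^sup>2 + 2 * (c - Th) * (w n * (t n - c)) + (c - Th)\<^sup>2 * w n)"
    by (intro sum.cong refl) (simp add: power2_eq_square algebra_simps)
  also have "\<dots> = PP * (\<Sum>p\<in>T. D p) + (c - Th)\<^sup>2 * PP"
    using I unfolding PP_def by (simp add: sum.distrib sum_distrib_left[symmetric])
  also have "(\<Sum>p\<in>T. D p) \<le> SS" unfolding SS_def using D_le T_prime by (intro sum_mono) auto
  also have "(c - Th)\<^sup>2 \<le> EE * SS" unfolding c_def by (rule center_bound)
  finally show ?thesis using PP0 SS0 by (simp add: algebra_simps mult_left_mono mult_right_mono)
qed

end


definition CC :: "real \<Rightarrow> real \<Rightarrow> real" where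
  "CC A B = (1 + (2 * A\<^sup>2 + 2 * (B / ln 4)\<^sup>2)) * CD A B"

lemma CC_pos: assumes "A > 0" shows "CC A B > 0"
proof -
  have "CD A B \<ge> 2 * (12 * A + 6) ^ nat \<lceil>4 * A * (4 * A + 2)\<rceil>" unfolding CD_def by simp
  moreover have "(12 * A + 6) ^ nat \<lceil>4 * A * (4 * A + 2)\<rceil> > 0" using assms by simp
  ultimately have "CD A B > 0" by linarith
  moreover have "1 + (2 * A\<^sup>2 + 2 * (B / ln 4)\<^sup>2) > 0" by (simp add: add_pos_nonneg)
  ultimately show ?thesis unfolding CC_def by simp
qed

context tkt
begin

lemma real_final:
  "(\<Sum>n\<in>{n. 1 \<le> n \<and> real n \<le> x}. w n * (t n - Th)\<^sup>2) \<le> CC A B * SS * (\<Sum>n\<in>{n. 1 \<le> n \<and> real n \<le> x}. w n)"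
proof -
  have SS0: "SS \<ge> 0" unfolding SS_def by (intro sum_nonneg mult_nonneg_nonneg w_nn) simp_all
  have EE0: "EE \<ge> 0" unfolding EE_def by (intro sum_nonneg) simp
  have "(\<Sum>n\<in>{n. 1 \<le> n \<and> real n \<le> x}. w n * (t n - Th)\<^sup>2) \<le> (\<Sum>n\<in>NN. w n * (t n - Th)\<^sup>2)"
    using small_in_NN finite_NN w_nn by (intro sum_mono2) auto
  also have "\<dots> \<le> PP * (1 + EE) * SS" by (rule varC_final)
  also have "\<dots> \<le> (CD A B * Wz x) * (1 + (2 * A\<^sup>2 + 2 * (B / ln 4)\<^sup>2)) * SS"
  proof (intro mult_right_mono mult_mono PP_bound)
    show "1 + EE \<le> 1 + (2 * A\<^sup>2 + 2 * (B / ln 4)\<^sup>2)" using EE_bound by simp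
    show "0 \<le> CD A B * Wz x"
    proof -
      have "CD A B \<ge> 0" unfolding CD_def using Apos by (simp add: le_max_iff_disj)
      thus ?thesis using Wz_nn by simp
    qed
    show "0 \<le> 1 + EE" using EE0 by simp
  qed (use SS0 in auto)
  also have "\<dots> = CC A B * SS * (\<Sum>n\<in>{n. 1 \<le> n \<and> real n \<le> x}. w n)"
    unfolding CC_def Wz_x by (simp add: algebra_simps)
  finally show ?thesis .
qed

end

theorem lemma5p1:
  fixes A B :: real
  assumes "A > 0" and "B > 0"
  shows "\<exists>C>0. \<forall>(x::real) (lam::nat \<Rightarrow> real) (th::nat \<Rightarrow> complex).
     x \<ge> 1 \<longrightarrow> (\<forall>n. lam n \<ge> 0) \<longrightarrow> multiplicative lam
     \<longrightarrow> classM x A B (\<lambda>n. complex_of_real (lam n)) \<longrightarrow> additive th \<longrightarrow>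
     (let Theta = (\<Sum>q\<in>{q. primepow q \<and> real q \<le> x}. of_real (lam q) * th q / of_nat q);
          S = (\<Sum>q\<in>{q. primepow q \<and> real q \<le> x}. lam q * (cmod (th q))\<^sup>2 / real q)
      in (\<Sum>n\<in>{n. 1 \<le> n \<and> real n \<le> x}. lam n / real n * (cmod (th n - Theta))\<^sup>2)
         \<le> C * S * (\<Sum>n\<in>{n. 1 \<le> n \<and> real n \<le> x}. lam n / real n))"
proof (intro exI[of _ "CC A B"] conjI allI impI)
  show "CC A B > 0" using CC_pos assms by blast
  fix x :: real and lam :: "nat \<Rightarrow> real" and th :: "nat \<Rightarrow> complex"
  assume x1: "x \<ge> 1" and nn: "\<forall>n. lam n \<ge> 0" and mult: "multiplicative lam"
    and cM: "classM x A B (\<lambda>n. complex_of_real (lam n))" and add: "additive th"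
  have lamA: "\<And>p. prime p \<Longrightarrow> real p \<le> x \<Longrightarrow> lam p \<le> A"
    using cM nn unfolding classM_def by (metis abs_of_nonneg norm_of_real)
  have lamB: "(\<Sum>(p,\<nu>)\<in>{(p,\<nu>). prime p \<and> 2 \<le> \<nu> \<and> real (p ^ \<nu>) \<le> x}.
          lam (p ^ \<nu>) * ln (real (p ^ \<nu>)) / real (p ^ \<nu>)) \<le> B"
    using cM nn unfolding classM_def by (simp add: case_prod_unfold)
  interpret tk x A B lam
    by unfold_locales (use x1 assms nn mult lamA lamB in auto)
  have addR: "additive (\<lambda>n. Re (th n))" and addI: "additive (\<lambda>n. Im (th n))"
    using add unfolding additive_def by auto
  interpret R: tkt x A B lam "\<lambda>n. Re (th n)" by unfold_locales (rule addR)
  interpret I: tkt x A B lam "\<lambda>n. Im (th n)" by unfold_locales (rule addI)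
  define Theta where "Theta = (\<Sum>q\<in>{q. primepow q \<and> real q \<le> x}. of_real (lam q) * th q / of_nat q)"
  define S where "S = (\<Sum>q\<in>{q. primepow q \<and> real q \<le> x}. lam q * (cmod (th q))\<^sup>2 / real q)"
  define Wx where "Wx = (\<Sum>n\<in>{n. 1 \<le> n \<and> real n \<le> x}. lam n / real n)"
  have ReT: "Re Theta = R.Th"
  proof -
    have "Re Theta = (\<Sum>q\<in>{q. primepow q \<and> real q \<le> x}. w q * Re (th q))"
      unfolding Theta_def w_def by (simp add: Re_sum)
    also have "\<dots> = R.Th" unfolding R.Th_def by (rule primepow_reindex) (use R.t1 in simp)
    finally show ?thesis .
  qed
  have ImT: "Im Theta = I.Th"
  proof -
    have "Im Theta = (\<Sum>q\<in>{q. primepow q \<and> real q \<le> x}. w q * Im (th q))"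
      unfolding Theta_def w_def by (simp add: Im_sum)
    also have "\<dots> = I.Th" unfolding I.Th_def by (rule primepow_reindex) (use I.t1 in simp)
    finally show ?thesis .
  qed
  have SS: "S = R.SS + I.SS"
  proof -
    have "S = (\<Sum>q\<in>{q. primepow q \<and> real q \<le> x}. w q * (Re (th q))\<^sup>2 + w q * (Im (th q))\<^sup>2)"
      unfolding S_def w_def by (intro sum.cong refl) (simp add: cmod_power2 algebra_simps add_divide_distrib)
    also have "\<dots> = (\<Sum>q\<in>{q. primepow q \<and> real q \<le> x}. w q * (Re (th q))\<^sup>2) + (\<Sum>q\<in>{q. primepow q \<and> real q \<le> x}. w q * (Im (th q))\<^sup>2)"
      by (rule sum.distrib)
    also have "(\<Sum>q\<in>{q. primepow q \<and> real q \<le> x}. w q * (Re (th q))\<^sup>2) = R.SS"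
      unfolding R.SS_def by (rule primepow_reindex) (use R.t1 in simp)
    also have "(\<Sum>q\<in>{q. primepow q \<and> real q \<le> x}. w q * (Im (th q))\<^sup>2) = I.SS"
      unfolding I.SS_def by (rule primepow_reindex) (use I.t1 in simp)
    finally show ?thesis .
  qed
  have "(\<Sum>n\<in>{n. 1 \<le> n \<and> real n \<le> x}. lam n / real n * (cmod (th n - Theta))\<^sup>2)
     = (\<Sum>n\<in>{n. 1 \<le> n \<and> real n \<le> x}. w n * (Re (th n) - R.Th)\<^sup>2) + (\<Sum>n\<in>{n. 1 \<le> n \<and> real n \<le> x}. w n * (Im (th n) - I.Th)\<^sup>2)"
    unfolding sum.distrib[symmetric] w_def
    by (intro sum.cong refl) (simp add: cmod_power2 ReT[symmetric] ImT[symmetric] algebra_simps)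
  also have "\<dots> \<le> CC A B * R.SS * Wx + CC A B * I.SS * Wx"
    using R.real_final I.real_final unfolding Wx_def w_def by (intro add_mono) auto
  also have "\<dots> = CC A B * S * Wx" unfolding SS by (simp add: algebra_simps)
  finally show "let Theta = (\<Sum>q\<in>{q. primepow q \<and> real q \<le> x}. of_real (lam q) * th q / of_nat q);
          S = (\<Sum>q\<in>{q. primepow q \<and> real q \<le> x}. lam q * (cmod (th q))\<^sup>2 / real q)
      in (\<Sum>n\<in>{n. 1 \<le> n \<and> real n \<le> x}. lam n / real n * (cmod (th n - Theta))\<^sup>2)
         \<le> CC A B * S * (\<Sum>n\<in>{n. 1 \<le> n \<and> real n \<le> x}. lam n / real n)"
    unfolding Let_def Theta_def S_def Wx_def .
qed



end
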